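(* Assume the setting described in the context and let $\theta=(\theta_1,\dots,\theta_{\mathfrak d})\in\mathbb R^{\mathfrak d}$. Write $x=(x_1,\dots,x_{\ell_0})$ for points of $[a,b]^{\ell_0}$, let empty products equal $1$, and for $k\in\{1,\dots,L\}$ let $\sum_{v_k,\dots,v_L}$ denote the sum over all $(v_k,v_{k+1},\dots,v_L)\in\mathbb N^{L-k+1}$ with $v_w\le\ell_w$ for all $w\in\{k,\dots,L\}$. Then (i) for all $r\in[1,\infty)$ it holds that $\mathcal L_r\in C^1(\mathbb R^{\mathfrak d},\mathbb R)$; (ii) for all $r\in[1,\infty)$, $k\in\{1,\dots,L\}$, $i\in\{1,\dots,\ell_k\}$, $j\in\{1,\dots,\ell_{k-1}\}$, $$\Big(\tfrac{\partial\mathcal L_r}{\partial\theta_{(i-1)\ell_{k-1}+j+\mathbf d_{k-1}}}\Big)(\theta)=\sum_{v_k,\dots,v_L}\int_{[a,b]^{\ell_0}}2\Big[\mathscr R_{r^{1/\max\{k-1,1\}}}(\mathcal N^{\max\{k-1,1\},\theta}_{r,j}(x))\mathbf 1_{(1,L]}(k)+x_j\mathbf 1_{\{1\}}(k)\Big]\mathbf 1_{\{i\}}(v_k)\Big[\mathcal N^{L,\theta}_{r,v_L}(x)-f_{v_L}(x)\Big]\prod_{n=k+1}^L\Big(\mathfrak w^{n,\theta}_{v_n,v_{n-1}}(\mathscr R_{r^{1/(n-1)}})'(\mathcal N^{n-1,\theta}_{r,v_{n-1}}(x))\Big)\,\mu(dx);$$ (iii) for all $r\in[1,\infty)$, $k\in\{1,\dots,L\}$,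 $i\in\{1,\dots,\ell_k\}$, $$\Big(\tfrac{\partial\mathcal L_r}{\partial\theta_{\ell_k\ell_{k-1}+i+\mathbf d_{k-1}}}\Big)(\theta)=\sum_{v_k,\dots,v_L}\int_{[a,b]^{\ell_0}}2\,\mathbf 1_{\{i\}}(v_k)\Big[\mathcal N^{L,\theta}_{r,v_L}(x)-f_{v_L}(x)\Big]\prod_{n=k+1}^L\Big(\mathfrak w^{n,\theta}_{v_n,v_{n-1}}(\mathscr R_{r^{1/(n-1)}})'(\mathcal N^{n-1,\theta}_{r,v_{n-1}}(x))\Big)\,\mu(dx);$$ (iv) $\limsup_{r\to\infty}\big(|\mathcal L_r(\theta)-\mathcal L_\infty(\theta)|+\|(\nabla\mathcal L_r)(\theta)-\mathcal G(\theta)\|\big)=0$; (v) for all $k\in\{1,\dots,L\}$, $i\in\{1,\dots,\ell_k\}$, $j\in\{1,\dots,\ell_{k-1}\}$, $$\mathcal G_{(i-1)\ell_{k-1}+j+\mathbf d_{k-1}}(\theta)=\sum_{v_k,\dots,v_L}\int_{[a,b]^{\ell_0}}2\Big[\mathscr R_\infty(\mathcal N^{\max\{k-1,1\},\theta}_{\infty,j}(x))\mathbf 1_{(1,L]}(k)+x_j\mathbf 1_{\{1\}}(k)\Big]\mathbf 1_{\{i\}}(v_k)\Big[\mathcal N^{L,\theta}_{\infty,v_L}(x)-f_{v_L}(x)\Big]\prod_{n=k+1}^L\Big(\mathfrak w^{n,\theta}_{v_n,v_{n-1}}\mathbf 1_{\mathcal X^{n-1,\theta}_{v_{n-1}}}(x)\Big)\,\mu(dx);$$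 (vi) for all $k\in\{1,\dots,L\}$, $i\in\{1,\dots,\ell_k\}$, $$\mathcal G_{\ell_k\ell_{k-1}+i+\mathbf d_{k-1}}(\theta)=\sum_{v_k,\dots,v_L}\int_{[a,b]^{\ell_0}}2\,\mathbf 1_{\{i\}}(v_k)\Big[\mathcal N^{L,\theta}_{\infty,v_L}(x)-f_{v_L}(x)\Big]\prod_{n=k+1}^L\Big(\mathfrak w^{n,\theta}_{v_n,v_{n-1}}\mathbf 1_{\mathcal X^{n-1,\theta}_{v_{n-1}}}(x)\Big)\,\mu(dx).$$
   Context: Setting. Let $L,\mathfrak d\in\mathbb N=\{1,2,\dots\}$, $(\ell_k)_{k\in\mathbb N_0}\subseteq\mathbb N$, $a\in\mathbb R$, $b\in(a,\infty)$, $\mathscr A\in(0,\infty)$, $\mathscr B\in(\mathscr A,\infty)$ with $\mathfrak d=\sum_{k=1}^L\ell_k(\ell_{k-1}+1)$; let $\mathbf a=\max\{|a|,|b|,1\}$ and $\mathbf d_k=\sum_{h=1}^k\ell_h(\ell_{h-1}+1)$ for $k\in\mathbb N_0$. For $\theta=(\theta_1,\dots,\theta_{\mathfrak d})\in\mathbb R^{\mathfrak d}$, $k\in\{1,\dots,L\}$, $i\in\{1,\dots,\ell_k\}$, $j\in\{1,\dots,\ell_{k-1}\}$ let $\mathfrak w^{k,\theta}_{i,j}=\theta_{(i-1)\ell_{k-1}+j+\mathbf d_{k-1}}$ and $\mathfrak b^{k,\theta}_i=\theta_{\ell_k\ell_{k-1}+i+\mathbf d_{k-1}}$, let $\mathfrak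 w^{k,\theta}=(\mathfrak w^{k,\theta}_{i,j})_{i,j}\in\mathbb R^{\ell_k\times\ell_{k-1}}$, $\mathfrak b^{k,\theta}=(\mathfrak b^{k,\theta}_1,\dots,\mathfrak b^{k,\theta}_{\ell_k})\in\mathbb R^{\ell_k}$, and $\mathcal A^\theta_k\colon\mathbb R^{\ell_{k-1}}\to\mathbb R^{\ell_k}$, $\mathcal A^\theta_k(x)=\mathfrak b^{k,\theta}+\mathfrak w^{k,\theta}x$. Let $\mathscr R_\infty(x)=\max\{x,0\}$ and let $\mathscr R_r\colon\mathbb R\to\mathbb R$, $r\in[1,\infty)$, satisfy for all $r\in[1,\infty)$: $\mathscr R_r\in C^1(\mathbb R,\mathbb R)$, $\mathscr R_r(x)=0$ for all $x\le\mathscr A r^{-1}$, $0\le\mathscr R_r(y)\le\max\{y,0\}$ for all $y\in\mathbb R$, $\mathscr R_r(z)=z$ for all $z\ge\mathscr B r^{-1}$; assume $\sup_{r\in[1,\infty)}\sup_{x\in\mathbb R}|(\mathscr R_r)'(x)|<\infty$. $\|\cdot\|$, $\langle\cdot,\cdot\rangle$ are the Euclidean norm and scalar product on each $\mathbb R^n$; for $r\in[1,\infty]$, $\mathfrak M_r(x_1,\dots,x_n)=(\mathscr R_r(x_1),\dots,\mathscr R_r(x_n))$. For $r\in[1,\infty]$, $\theta\in\mathbb R^{\mathfrak d}$ define $\mathcal N^{k,\theta}_r=(\mathcal N^{k,\theta}_{r,1},\dots,\mathcal N^{k,\theta}_{r,\ell_k})\colon\mathbb R^{\ell_0}\to\mathbb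 R^{\ell_k}$, $k\in\{1,\dots,L\}$, by $\mathcal N^{1,\theta}_r=\mathcal A^\theta_1$ and $\mathcal N^{k+1,\theta}_r(x)=\mathcal A^\theta_{k+1}(\mathfrak M_{r^{1/k}}(\mathcal N^{k,\theta}_r(x)))$ (with $\infty^{1/k}=\infty$), and let $\mathcal X^{k,\theta}_i=\{y\in[a,b]^{\ell_0}\colon\mathcal N^{k,\theta}_{\infty,i}(y)>0\}$. Let $\mu$ be a measure on the Borel $\sigma$-algebra of $[a,b]^{\ell_0}$ with $\mathfrak m=\mu([a,b]^{\ell_0})\in\mathbb R$, let $f=(f_1,\dots,f_{\ell_L})\colon[a,b]^{\ell_0}\to\mathbb R^{\ell_L}$ be measurable, and for $r\in[1,\infty]$ let $\mathcal L_r\colon\mathbb R^{\mathfrak d}\to\mathbb R$ be given by $\mathcal L_r(\theta)=\int_{[a,b]^{\ell_0}}\|\mathcal N^{L,\theta}_r(x)-f(x)\|^2\,\mu(dx)$ (these integrals are real numbers as part of the setting). Let $\mathcal G=(\mathcal G_1,\dots,\mathcal G_{\mathfrak d})\colon\mathbb R^{\mathfrak d}\to\mathbb R^{\mathfrak d}$ satisfy $\mathcal G(\theta)=\lim_{r\to\infty}(\nabla\mathcal L_r)(\theta)$ for every $\theta$ for which $((\nabla\mathcal L_r)(\theta))_{r\in[1,\infty)}$ is convergent as $r\to\infty$. *)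

theory Defs
  imports "HOL-Analysis.Analysis"
begin

text \<open>Parameter vectors theta are read through their coordinates theta_1, ..., theta_d,
  given as a function nat => real (only indices 1..d are used).\<close>

definition dsum :: "(nat \<Rightarrow> nat) \<Rightarrow> nat \<Rightarrow> nat" where
  "dsum l k = (\<Sum>h = 1..k. l h * (l (h - 1) + 1))"

definition wgt :: "(nat \<Rightarrow> nat) \<Rightarrow> (nat \<Rightarrow> real) \<Rightarrow> nat \<Rightarrow> nat \<Rightarrow> nat \<Rightarrow> real" where
  "wgt l \<theta> k i j = \<theta> ((i - 1) * l (k - 1) + j + dsum l (k - 1))"

definition bias :: "(nat \<Rightarrow> nat) \<Rightarrow> (nat \<Rightarrow> real) \<Rightarrow> nat \<Rightarrow> nat \<Rightarrow> real" where
  "bias l \<theta> k i = \<theta> (l k * l (k - 1) + i + dsum l (k - 1))"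

text \<open>Realization: net l theta act k x i is the i-th component of N^{k,theta}(x), where
  act k is the activation applied (componentwise) to the output of layer k.
  Inputs x :: nat => real with components x_1..x_{l_0}.  (Layer 0 is unused.)\<close>

fun net :: "(nat \<Rightarrow> nat) \<Rightarrow> (nat \<Rightarrow> real) \<Rightarrow> (nat \<Rightarrow> real \<Rightarrow> real) \<Rightarrow> nat \<Rightarrow> (nat \<Rightarrow> real) \<Rightarrow> nat \<Rightarrow> real" where
  "net l \<theta> act 0 x i = 0"
| "net l \<theta> act (Suc 0) x i = bias l \<theta> 1 i + (\<Sum>j = 1..l 0. wgt l \<theta> 1 i j * x j)"
| "net l \<theta> act (Suc (Suc k)) x i =
     bias l \<theta> (Suc (Suc k)) i
     + (\<Sum>j = 1..l (Suc k). wgt l \<theta> (Suc (Suc k)) i j * act (Suc k) (net l \<theta> act (Suc k) x j))"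

definition relu :: "real \<Rightarrow> real" where
  "relu x = max x 0"

definition actR :: "(real \<Rightarrow> real \<Rightarrow> real) \<Rightarrow> real \<Rightarrow> nat \<Rightarrow> real \<Rightarrow> real" where
  "actR R r k = R (r powr (1 / real k))"

definition actInf :: "nat \<Rightarrow> real \<Rightarrow> real" where
  "actInf k = relu"

definition coords :: "(nat \<Rightarrow> 'd) \<Rightarrow> real^'d \<Rightarrow> nat \<Rightarrow> real" where
  "coords idx v p = v $ idx p"

definition loss :: "(nat \<Rightarrow> nat) \<Rightarrow> nat \<Rightarrow> (nat \<Rightarrow> real) measure \<Rightarrow> ((nat \<Rightarrow> real) \<Rightarrow> nat \<Rightarrow> real)
    \<Rightarrow> (nat \<Rightarrow> real \<Rightarrow> real) \<Rightarrow> (nat \<Rightarrow> real) \<Rightarrow> real" where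
  "loss l L \<mu> f act \<theta> = (\<integral>x. (\<Sum>i = 1..l L. (net l \<theta> act L x i - f x i)\<^sup>2) \<partial>\<mu>)"

definition grad :: "(real^'d \<Rightarrow> real) \<Rightarrow> real^'d \<Rightarrow> real^'d" where
  "grad F x = (THE g. (F has_derivative (\<lambda>h. g \<bullet> h)) (at x))"

end

theory Submission
  imports Defs "HOL-Analysis.Analysis"
begin

lemma dom_conv_at:
  fixes s :: "'a::first_countable_topology \<Rightarrow> 'b \<Rightarrow> real"
  assumes sm: "\<And>y. s y \<in> borel_measurable M" and fm: "f \<in> borel_measurable M"
    and w: "integrable M w"
    and lim: "\<And>x. x \<in> space M \<Longrightarrow> ((\<lambda>y. s y x) \<longlongrightarrow> f x) (at z)"
    and bnd: "\<forall>\<^sub>F y in at z. \<forall>x\<in>space M. \<bar>s y x\<bar> \<le> w x"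
  shows "((\<lambda>y. \<integral>x. s y x \<partial>M) \<longlongrightarrow> (\<integral>x. f x \<partial>M)) (at z)"
  unfolding tendsto_at_iff_sequentially
proof (intro allI impI)
  fix X :: "nat \<Rightarrow> 'a" assume Xne: "\<forall>i. X i \<in> UNIV - {z}" and Xl: "X \<longlonglongrightarrow> z"
  have Xf: "filterlim X (at z) sequentially"
    using Xne Xl by (auto simp: filterlim_at)
  from filterlim_iff[THEN iffD1, OF Xf, rule_format, OF bnd]
  obtain N where wN: "\<And>n. N \<le> n \<Longrightarrow> \<forall>x\<in>space M. \<bar>s (X n) x\<bar> \<le> w x"
    by (auto simp: eventually_sequentially)
  show "((\<lambda>y. \<integral>x. s y x \<partial>M) \<circ> X) \<longlonglongrightarrow> (\<integral>x. f x \<partial>M)"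
    unfolding comp_def
  proof (rule LIMSEQ_offset, rule integral_dominated_convergence[where w=w])
    show "AE x in M. norm (s (X (n + N)) x) \<le> w x" for n
      using wN[of "n+N"] by (auto intro!: AE_I2)
    show "AE x in M. (\<lambda>n. s (X (n + N)) x) \<longlonglongrightarrow> f x"
    proof (rule AE_I2)
      fix x assume x: "x \<in> space M"
      have "(\<lambda>n. s (X n) x) \<longlonglongrightarrow> f x"
        using filterlim_compose[OF lim[OF x] Xf] by simp
      then show "(\<lambda>n. s (X (n + N)) x) \<longlonglongrightarrow> f x"
        by (rule LIMSEQ_ignore_initial_segment)
    qed
  qed (use sm fm w in auto)
qed

lemma param_deriv:
  fixes F :: "'a::euclidean_space \<Rightarrow> 'b \<Rightarrow> real" and F' :: "'a \<Rightarrow> 'b \<Rightarrow> 'a \<Rightarrow> real"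
  assumes der: "\<And>v x. x \<in> space M \<Longrightarrow> ((\<lambda>v. F v x) has_derivative F' v x) (at v)"
    and meas': "\<And>v h. (\<lambda>x. F' v x h) \<in> borel_measurable M"
    and int: "\<And>v. integrable M (F v)"
    and bnd: "\<And>v0. \<exists>e>0. \<exists>g. integrable M g \<and>
               (\<forall>v\<in>ball v0 e. \<forall>x\<in>space M. \<forall>h. \<bar>F' v x h\<bar> \<le> g x * norm h)"
  shows "((\<lambda>v. \<integral>x. F v x \<partial>M) has_derivative (\<lambda>h. \<integral>x. F' v0 x h \<partial>M)) (at v0)"
proof -
  obtain e g where e: "e > 0" and gi: "integrable M g"
    and gb: "\<And>v x h. v \<in> ball v0 e \<Longrightarrow> x \<in> space M \<Longrightarrow> \<bar>F' v x h\<bar> \<le> g x * norm h"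
    using bnd[of v0] by blast
  have bl: "\<And>x. x \<in> space M \<Longrightarrow> linear (F' v0 x)"
    using der by (auto dest: has_derivative_bounded_linear bounded_linear.linear)
  have intF': "integrable M (\<lambda>x. F' v0 x h)" for h
  proof (rule Bochner_Integration.integrable_bound[OF _ meas'])
    show "integrable M (\<lambda>x. g x * norm h)" using gi by auto
    show "AE x in M. norm (F' v0 x h) \<le> norm (g x * norm h)"
    proof (rule AE_I2)
      fix x assume "x \<in> space M"
      then have "\<bar>F' v0 x h\<bar> \<le> g x * norm h" using gb[of v0] e by auto
      then show "norm (F' v0 x h) \<le> norm (g x * norm h)"
        by (simp add: abs_mult) (metis abs_ge_self mult_right_mono norm_ge_zero order_trans)
    qed
  qed
  have blin: "bounded_linear (\<lambda>h. \<integral>x. F' v0 x h \<partial>M)"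
  proof (rule bounded_linear_intro[where K="\<integral>x. g x \<partial>M"])
    fix h1 h2
    have "(\<integral>x. F' v0 x (h1 + h2) \<partial>M) = (\<integral>x. F' v0 x h1 + F' v0 x h2 \<partial>M)"
      by (rule Bochner_Integration.integral_cong) (auto simp: linear_add[OF bl])
    also have "\<dots> = (\<integral>x. F' v0 x h1 \<partial>M) + (\<integral>x. F' v0 x h2 \<partial>M)"
      using intF' by simp
    finally show "(\<integral>x. F' v0 x (h1 + h2) \<partial>M) = (\<integral>x. F' v0 x h1 \<partial>M) + (\<integral>x. F' v0 x h2 \<partial>M)" .
  next
    fix r h
    have "(\<integral>x. F' v0 x (r *\<^sub>R h) \<partial>M) = (\<integral>x. r * F' v0 x h \<partial>M)"
      by (rule Bochner_Integration.integral_cong) (auto simp: linear_scale[OF bl])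
    then show "(\<integral>x. F' v0 x (r *\<^sub>R h) \<partial>M) = r *\<^sub>R (\<integral>x. F' v0 x h \<partial>M)" by simp
  next
    fix h
    have "norm (\<integral>x. F' v0 x h \<partial>M) \<le> (\<integral>x. norm (F' v0 x h) \<partial>M)"
      by (rule integral_norm_bound)
    also have "\<dots> \<le> (\<integral>x. g x * norm h \<partial>M)"
      using gb[of v0] e intF' gi by (intro integral_mono) auto
    also have "\<dots> = norm h * (\<integral>x. g x \<partial>M)" by simp
    finally show "norm (\<integral>x. F' v0 x h \<partial>M) \<le> norm h * (\<integral>x. g x \<partial>M)" .
  qed
  define Q where "Q h x = (F (v0 + h) x - F v0 x - F' v0 x h) / norm h" for h x
  have Qlim: "((\<lambda>h. \<integral>x. Q h x \<partial>M) \<longlongrightarrow> (\<integral>x. 0 \<partial>M)) (at 0)"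
  proof (rule dom_conv_at[where w="\<lambda>x. 2 * g x"])
    show "Q h \<in> borel_measurable M" for h
      unfolding Q_def using int[of "v0+h"] int[of v0] meas'[of v0 h] by auto
    show "integrable M (\<lambda>x. 2 * g x)" using gi by auto
    show "((\<lambda>h. Q h x) \<longlongrightarrow> 0) (at 0)" if x: "x \<in> space M" for x
    proof -
      have "((\<lambda>h. norm (F (v0 + h) x - F v0 x - F' v0 x h) / norm h) \<longlongrightarrow> 0) (at 0)"
        using der[OF x, of v0] unfolding has_derivative_at by auto
      then have "((\<lambda>h. norm (Q h x)) \<longlongrightarrow> 0) (at 0)"
        unfolding Q_def by simp
      then show ?thesis using tendsto_norm_zero_iff by blast
    qed
    show "\<forall>\<^sub>F h in at 0. \<forall>x\<in>space M. \<bar>Q h x\<bar> \<le> 2 * g x"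
    proof -
      have "\<forall>\<^sub>F h in at (0::'a). h \<in> ball 0 e"
        using e by (intro eventually_at_in_open') auto
      then show ?thesis
      proof eventually_elim
        case (elim h)
        show ?case
        proof
          fix x assume x: "x \<in> space M"
          have "norm (F (v0 + h) x - F v0 x - F' v0 x ((v0 + h) - v0)) \<le> norm ((v0 + h) - v0) * (2 * g x)"
          proof (rule differentiable_bound_linearization[where S="ball v0 e" and f="\<lambda>v. F v x" and f'="\<lambda>v. F' v x"])
            show "v0 + t *\<^sub>R (v0 + h - v0) \<in> ball v0 e" if "t \<in> {0..1}" for t
              using elim that by (auto simp: dist_norm) (smt (verit) mult_left_le_one_le norm_ge_zero)
            show "((\<lambda>v. F v x) has_derivative F' y x) (at y within ball v0 e)" for y
              using der[OF x] has_derivative_at_withinI by blast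
            show "onorm (F' y x - F' v0 x) \<le> 2 * g x" if "y \<in> ball v0 e" for y
            proof (rule onorm_le)
              fix h
              have "\<bar>F' y x h\<bar> \<le> g x * norm h" "\<bar>F' v0 x h\<bar> \<le> g x * norm h"
                using gb[OF that x] gb[of v0 x h] e x by auto
              then show "norm ((F' y x - F' v0 x) h) \<le> 2 * g x * norm h" by simp
            qed
            show "v0 \<in> ball v0 e" using e by simp
          qed
          moreover have "0 \<le> g x"
          proof -
            obtain b :: 'a where b: "b \<in> Basis" using nonempty_Basis by blast
            have "\<bar>F' v0 x b\<bar> \<le> g x * norm b" using gb[of v0 x b] e x by auto
            then show ?thesis using b by simp
          qed
          ultimately show "\<bar>Q h x\<bar> \<le> 2 * g x"
            unfolding Q_def by (cases "h = 0") (auto simp: divide_le_eq abs_divide mult.commute)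
        qed
      qed
    qed
  qed simp
  have "((\<lambda>h. norm ((\<integral>x. F (v0 + h) x \<partial>M) - (\<integral>x. F v0 x \<partial>M) - (\<integral>x. F' v0 x h \<partial>M)) / norm h) \<longlongrightarrow> 0) (at 0)"
  proof -
    have eq: "norm ((\<integral>x. F (v0 + h) x \<partial>M) - (\<integral>x. F v0 x \<partial>M) - (\<integral>x. F' v0 x h \<partial>M)) / norm h
        = norm (\<integral>x. Q h x \<partial>M)" for h
    proof -
      have "(\<integral>x. Q h x \<partial>M) = (\<integral>x. F (v0 + h) x - F v0 x - F' v0 x h \<partial>M) / norm h"
        unfolding Q_def by simp
      also have "(\<integral>x. F (v0 + h) x - F v0 x - F' v0 x h \<partial>M)
          = (\<integral>x. F (v0 + h) x \<partial>M) - (\<integral>x. F v0 x \<partial>M) - (\<integral>x. F' v0 x h \<partial>M)"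
        using int[of "v0+h"] int[of v0] intF'[of h] by simp
      finally show ?thesis by simp
    qed
    show ?thesis unfolding eq using tendsto_norm[OF Qlim] by simp
  qed
  then show ?thesis unfolding has_derivative_at using blin by blast
qed

lemma param_C1:
  fixes F :: "'a::euclidean_space \<Rightarrow> 'b \<Rightarrow> real" and F' :: "'a \<Rightarrow> 'b \<Rightarrow> 'a \<Rightarrow> real"
  assumes der: "\<And>v x. x \<in> space M \<Longrightarrow> ((\<lambda>v. F v x) has_derivative F' v x) (at v)"
    and meas': "\<And>v h. (\<lambda>x. F' v x h) \<in> borel_measurable M"
    and int: "\<And>v. integrable M (F v)"
    and cont: "\<And>x h. x \<in> space M \<Longrightarrow> continuous_on UNIV (\<lambda>v. F' v x h)"
    and bnd: "\<And>v0. \<exists>e>0. \<exists>g. integrable M g \<and>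
               (\<forall>v\<in>ball v0 e. \<forall>x\<in>space M. \<forall>h. \<bar>F' v x h\<bar> \<le> g x * norm h)"
  shows "\<exists>D :: 'a \<Rightarrow> ('a \<Rightarrow>\<^sub>L real). (\<forall>v. ((\<lambda>v. \<integral>x. F v x \<partial>M) has_derivative blinfun_apply (D v)) (at v))
           \<and> continuous_on UNIV D \<and> (\<forall>v h. D v h = (\<integral>x. F' v x h \<partial>M))"
proof -
  have d: "((\<lambda>v. \<integral>x. F v x \<partial>M) has_derivative (\<lambda>h. \<integral>x. F' v0 x h \<partial>M)) (at v0)" for v0
    by (rule param_deriv[OF der meas' int bnd])
  define D where "D v = Blinfun (\<lambda>h. \<integral>x. F' v x h \<partial>M)" for v
  have Dapp: "blinfun_apply (D v) = (\<lambda>h. \<integral>x. F' v x h \<partial>M)" for v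
    unfolding D_def using d[of v] by (auto intro!: bounded_linear_Blinfun_apply has_derivative_bounded_linear)
  have "continuous_on UNIV D"
  proof (rule continuous_on_blinfun_componentwise)
    fix i :: 'a
    show "continuous_on UNIV (\<lambda>v. blinfun_apply (D v) i)"
      unfolding Dapp
    proof (intro continuous_at_imp_continuous_on ballI)
      fix v0 :: 'a
      obtain e g where e: "e > 0" and gi: "integrable M g"
        and gb: "\<And>v x h. v \<in> ball v0 e \<Longrightarrow> x \<in> space M \<Longrightarrow> \<bar>F' v x h\<bar> \<le> g x * norm h"
        using bnd[of v0] by blast
      show "continuous (at v0) (\<lambda>v. \<integral>x. F' v x i \<partial>M)"
        unfolding continuous_at
      proof (rule dom_conv_at[where w="\<lambda>x. g x * norm i"])
        show "integrable M (\<lambda>x. g x * norm i)" using gi by auto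
        show "((\<lambda>y. F' y x i) \<longlongrightarrow> F' v0 x i) (at v0)" if "x \<in> space M" for x
          using cont[OF that, of i] by (simp add: continuous_on_eq_continuous_at continuous_at)
        have "\<forall>\<^sub>F v in at v0. v \<in> ball v0 e"
          using e by (intro eventually_at_in_open') auto
        then show "\<forall>\<^sub>F y in at v0. \<forall>x\<in>space M. \<bar>F' y x i\<bar> \<le> g x * norm i"
          by eventually_elim (use gb in auto)
      qed (use meas' in auto)
    qed
  qed
  then show ?thesis using d Dapp by (intro exI[of _ D]) auto
qed

fun dnet :: "(nat \<Rightarrow> nat) \<Rightarrow> (nat \<Rightarrow> real) \<Rightarrow> (nat \<Rightarrow> real \<Rightarrow> real) \<Rightarrow> (nat \<Rightarrow> real \<Rightarrow> real)
    \<Rightarrow> nat \<Rightarrow> (nat \<Rightarrow> real) \<Rightarrow> nat \<Rightarrow> (nat \<Rightarrow> real) \<Rightarrow> real" where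
  "dnet l th act act' 0 x i h = 0"
| "dnet l th act act' (Suc 0) x i h = bias l h 1 i + (\<Sum>j = 1..l 0. wgt l h 1 i j * x j)"
| "dnet l th act act' (Suc (Suc k)) x i h =
     bias l h (Suc (Suc k)) i
     + (\<Sum>j = 1..l (Suc k). wgt l h (Suc (Suc k)) i j * act (Suc k) (net l th act (Suc k) x j)
          + wgt l th (Suc (Suc k)) i j * act' (Suc k) (net l th act (Suc k) x j)
            * dnet l th act act' (Suc k) x j h)"

lemma coords_deriv:
  "((\<lambda>v. coords idx v p) has_derivative (\<lambda>h. coords idx h p)) (at v)"
  unfolding coords_def by (rule bounded_linear_imp_has_derivative) auto

lemma bias_deriv:
  "((\<lambda>v. bias l (coords idx v) k i) has_derivative (\<lambda>h. bias l (coords idx h) k i)) (at v)"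
  unfolding bias_def by (rule coords_deriv)

lemma wgt_deriv:
  "((\<lambda>v. wgt l (coords idx v) k i j) has_derivative (\<lambda>h. wgt l (coords idx h) k i j)) (at v)"
  unfolding wgt_def by (rule coords_deriv)

lemma act_chain:
  assumes "(act has_real_derivative d) (at (g v))" "(g has_derivative g') (at v)"
  shows "((\<lambda>v. act (g v)) has_derivative (\<lambda>h. d * g' h)) (at v)"
proof -
  show ?thesis
    using diff_chain_at[OF assms(2) has_field_derivative_imp_has_derivative[OF assms(1)]]
    by (simp add: comp_def)
qed

lemma net_deriv:
  assumes act: "\<And>k y. (act k has_real_derivative act' k y) (at y)"
  shows "((\<lambda>v. net l (coords idx v) act k x i) has_derivative
           (\<lambda>h. dnet l (coords idx v) act act' k x i (coords idx h))) (at v)"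
proof (induction k arbitrary: i rule: less_induct)
  case (less k)
  show ?case
  proof (cases k)
    case 0
    then show ?thesis by simp
  next
    case (Suc m)
    show ?thesis
    proof (cases m)
      case 0
      then show ?thesis using Suc 
        by (auto intro!: derivative_eq_intros bias_deriv wgt_deriv)
    next
      case (Suc m')
      have IH: "((\<lambda>v. net l (coords idx v) act (Suc m') x j) has_derivative
           (\<lambda>h. dnet l (coords idx v) act act' (Suc m') x j (coords idx h))) (at v)" for j
        using less[of "Suc m'"] \<open>k = Suc m\<close> Suc by auto
      have A: "((\<lambda>v. act (Suc m') (net l (coords idx v) act (Suc m') x j)) has_derivative
           (\<lambda>h. act' (Suc m') (net l (coords idx v) act (Suc m') x j) * dnet l (coords idx v) act act' (Suc m') x j (coords idx h))) (at v)" for j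
        by (rule act_chain[OF act IH])
      show ?thesis using \<open>k = Suc m\<close> Suc 
        by (auto intro!: derivative_eq_intros bias_deriv wgt_deriv A simp: algebra_simps)
    qed
  qed
qed

lemma sum_PiE_insert:
  assumes "x \<notin> S"
  shows "(\<Sum>v\<in>PiE (insert x S) T. G v) = (\<Sum>y\<in>T x. \<Sum>v\<in>PiE S T. G (v(x := y)))"
proof -
  have "(\<Sum>v\<in>PiE (insert x S) T. G v) = (\<Sum>p\<in>T x \<times> PiE S T. G ((\<lambda>(y, g). g(x := y)) p))"
    unfolding PiE_insert_eq by (rule sum.reindex[OF inj_combinator[OF assms], unfolded comp_def])
  also have "\<dots> = (\<Sum>y\<in>T x. \<Sum>v\<in>PiE S T. G (v(x := y)))"
    by (simp add: sum.cartesian_product split_def)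
  finally show ?thesis .
qed

definition Psum :: "(nat \<Rightarrow> nat) \<Rightarrow> (nat \<Rightarrow> nat \<Rightarrow> nat \<Rightarrow> real) \<Rightarrow> nat \<Rightarrow> nat \<Rightarrow> nat \<Rightarrow> nat \<Rightarrow> real" where
  "Psum l C k i m u = (\<Sum>v\<in>PiE {k..m} (\<lambda>w. {1..l w}).
      if v m = u \<and> v k = i then (\<Prod>n\<in>{k+1..m}. C n (v n) (v (n - 1))) else 0)"

lemma Psum_base:
  assumes "u \<in> {1..l k}" "i \<in> {1..l k}"
  shows "Psum l C k i k u = (if u = i then 1 else 0)"
proof -
  let ?G = "\<lambda>v. if v k = u \<and> v k = i then (\<Prod>n\<in>{k+1..k}. C n (v n) (v (n - 1))) else (0::real)"
  have "Psum l C k i k u = (\<Sum>v\<in>PiE (insert k {}) (\<lambda>w. {1..l w}). ?G v)"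
    unfolding Psum_def by simp
  also have "\<dots> = (\<Sum>y\<in>{1..l k}. \<Sum>v\<in>PiE {} (\<lambda>w. {1..l w}). ?G (v(k := y)))"
    by (rule sum_PiE_insert) simp
  also have "\<dots> = (\<Sum>y\<in>{1..l k}. if y = u \<and> y = i then 1 else (0::real))"
  proof -
    have e: "{k+1..k} = ({}::nat set)" by auto
    show ?thesis unfolding PiE_empty_domain e by (simp cong: if_cong)
  qed
  also have "\<dots> = (if u = i then 1 else 0)"
  proof (cases "u = i")
    case True then show ?thesis using assms by (simp add: sum.delta cong: conj_cong)
  next
    case False
    then show ?thesis by (auto intro!: sum.neutral)
  qed
  finally show ?thesis .
qed

lemma Psum_step:
  assumes km: "k \<le> m" and u: "u \<in> {1..l (Suc m)}"
  shows "Psum l C k i (Suc m) u = (\<Sum>j\<in>{1..l m}. C (Suc m) u j * Psum l C k i m j)"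
proof -
  let ?T = "\<lambda>w. {1..l w}"
  have ins: "{k..Suc m} = insert (Suc m) {k..m}" using km by auto
  have prod_upd: "(\<Prod>n\<in>{k+1..Suc m}. C n ((v(Suc m := y)) n) ((v(Suc m := y)) (n - 1)))
      = C (Suc m) y (v m) * (\<Prod>n\<in>{k+1..m}. C n (v n) (v (n - 1)))" for v y
  proof -
    have "{k+1..Suc m} = insert (Suc m) {k+1..m}" using km by auto
    then have "(\<Prod>n\<in>{k+1..Suc m}. C n ((v(Suc m := y)) n) ((v(Suc m := y)) (n - 1)))
       = C (Suc m) y (v m) * (\<Prod>n\<in>{k+1..m}. C n ((v(Suc m := y)) n) ((v(Suc m := y)) (n - 1)))"
      by simp
    also have "(\<Prod>n\<in>{k+1..m}. C n ((v(Suc m := y)) n) ((v(Suc m := y)) (n - 1)))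
        = (\<Prod>n\<in>{k+1..m}. C n (v n) (v (n - 1)))"
      by (rule prod.cong) auto
    finally show ?thesis .
  qed
  have "Psum l C k i (Suc m) u = (\<Sum>y\<in>{1..l (Suc m)}. \<Sum>v\<in>PiE {k..m} ?T.
      if y = u \<and> v k = i then C (Suc m) y (v m) * (\<Prod>n\<in>{k+1..m}. C n (v n) (v (n - 1))) else 0)"
    unfolding Psum_def ins
  proof (subst sum_PiE_insert, simp, intro sum.cong refl)
    fix y v
    show "(if (v(Suc m := y)) (Suc m) = u \<and> (v(Suc m := y)) k = i
            then \<Prod>n\<in>{k+1..Suc m}. C n ((v(Suc m := y)) n) ((v(Suc m := y)) (n - 1)) else 0)
        = (if y = u \<and> v k = i then C (Suc m) y (v m) * (\<Prod>n\<in>{k+1..m}. C n (v n) (v (n - 1))) else 0)"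
      by (subst prod_upd) (use km in auto)
  qed
  also have "\<dots> = (\<Sum>v\<in>PiE {k..m} ?T.
      if v k = i then C (Suc m) u (v m) * (\<Prod>n\<in>{k+1..m}. C n (v n) (v (n - 1))) else 0)"
  proof (subst sum.swap, intro sum.cong refl)
    fix v
    show "(\<Sum>y\<in>{1..l (Suc m)}. if y = u \<and> v k = i then C (Suc m) y (v m) * (\<Prod>n\<in>{k+1..m}. C n (v n) (v (n - 1))) else 0)
      = (if v k = i then C (Suc m) u (v m) * (\<Prod>n\<in>{k+1..m}. C n (v n) (v (n - 1))) else 0)"
      using u by (cases "v k = i") (simp_all add: sum.delta' cong: if_cong)
  qed
  also have "\<dots> = (\<Sum>v\<in>PiE {k..m} ?T. \<Sum>j\<in>{1..l m}.
      C (Suc m) u j * (if v m = j \<and> v k = i then (\<Prod>n\<in>{k+1..m}. C n (v n) (v (n - 1))) else 0))"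
  proof (rule sum.cong[OF refl])
    fix v assume v: "v \<in> PiE {k..m} ?T"
    then have "v m \<in> {1..l m}" using km by (auto simp: PiE_def Pi_def)
    then show "(if v k = i then C (Suc m) u (v m) * (\<Prod>n\<in>{k+1..m}. C n (v n) (v (n - 1))) else 0)
      = (\<Sum>j\<in>{1..l m}. C (Suc m) u j * (if v m = j \<and> v k = i then (\<Prod>n\<in>{k+1..m}. C n (v n) (v (n - 1))) else 0))"
      by (auto simp: if_distrib sum.delta cong: if_cong)
  qed
  also have "\<dots> = (\<Sum>j\<in>{1..l m}. C (Suc m) u j * Psum l C k i m j)"
    unfolding Psum_def sum_distrib_left by (rule sum.swap)
  finally show ?thesis .
qed

lemma dsum_Suc: "dsum l (Suc k) = dsum l k + l (Suc k) * (l k + 1)"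
  by (simp add: dsum_def)

lemma dsum_mono: "m \<le> n \<Longrightarrow> dsum l m \<le> dsum l n"
  unfolding dsum_def by (rule sum_mono2) auto

lemma nat_div_inj:
  fixes a a' c j j' :: nat
  assumes "1 \<le> j" "j \<le> c" "1 \<le> j'" "j' \<le> c" "a * c + j = a' * c + j'"
  shows "a = a' \<and> j = j'"
proof -
  have c: "c > 0" using assms by auto
  have dv: "(d::nat) < c \<Longrightarrow> (b * c + d) div c = b" for b d by simp
  have "(a * c + (j - 1)) div c = a" using assms(1,2) by (intro dv) auto
  moreover have "(a' * c + (j' - 1)) div c = a'" using assms(3,4) by (intro dv) auto
  moreover have "a * c + (j - 1) = a' * c + (j' - 1)" using assms by simp
  ultimately have "a = a'" by metis
  then show ?thesis using assms by simp
qed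

lemma windex_range:
  assumes "1 \<le> k" "i \<in> {1..l k}" "j \<in> {1..l (k - 1)}"
  shows "dsum l (k - 1) < (i - 1) * l (k - 1) + j + dsum l (k - 1)"
    and "(i - 1) * l (k - 1) + j + dsum l (k - 1) \<le> dsum l (k - 1) + l k * l (k - 1)"
proof -
  show "dsum l (k - 1) < (i - 1) * l (k - 1) + j + dsum l (k - 1)" using assms by auto
  have "(i - 1) * l (k - 1) + j \<le> (i - 1) * l (k - 1) + l (k - 1)" using assms by auto
  also have "\<dots> = i * l (k - 1)" using assms by (cases i) auto
  also have "\<dots> \<le> l k * l (k - 1)" using assms by auto
  finally show "(i - 1) * l (k - 1) + j + dsum l (k - 1) \<le> dsum l (k - 1) + l k * l (k - 1)" by simp
qed

lemma dsum_k: "1 \<le> k \<Longrightarrow> dsum l k = dsum l (k - 1) + l k * (l (k - 1) + 1)"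
  by (cases k) (auto simp: dsum_Suc)

lemma bindex_range:
  assumes "1 \<le> k" "i \<in> {1..l k}"
  shows "dsum l (k - 1) + l k * l (k - 1) < l k * l (k - 1) + i + dsum l (k - 1)"
    and "l k * l (k - 1) + i + dsum l (k - 1) \<le> dsum l k"
  using assms by (auto simp: dsum_k algebra_simps)

lemma windex_layer:
  assumes "1 \<le> k" "i \<in> {1..l k}" "j \<in> {1..l (k - 1)}"
  shows "dsum l (k - 1) < (i - 1) * l (k - 1) + j + dsum l (k - 1)"
    "(i - 1) * l (k - 1) + j + dsum l (k - 1) \<le> dsum l k"
  using windex_range[where l=l, OF assms] dsum_k[OF assms(1), of l] by (auto simp: algebra_simps)

lemma bindex_layer:
  assumes "1 \<le> k" "i \<in> {1..l k}"
  shows "dsum l (k - 1) < l k * l (k - 1) + i + dsum l (k - 1)"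
    "l k * l (k - 1) + i + dsum l (k - 1) \<le> dsum l k"
  using bindex_range[where l=l, OF assms] by auto

lemma layer_disj:
  assumes "1 \<le> m" "1 \<le> k" "m \<noteq> k" "dsum l (m - 1) < p" "p \<le> dsum l m"
    "dsum l (k - 1) < q" "q \<le> dsum l k"
  shows "p \<noteq> q"
proof
  assume pq: "p = q"
  show False
  proof (cases "m < k")
    case True
    then have "dsum l m \<le> dsum l (k - 1)" by (intro dsum_mono) auto
    then show False using assms pq by auto
  next
    case False
    then have "dsum l k \<le> dsum l (m - 1)" using assms by (intro dsum_mono) auto
    then show False using assms pq by auto
  qed
qed

definition Cf :: "(nat \<Rightarrow> nat) \<Rightarrow> (nat \<Rightarrow> real) \<Rightarrow> (nat \<Rightarrow> real \<Rightarrow> real) \<Rightarrow> (nat \<Rightarrow> real \<Rightarrow> real)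
   \<Rightarrow> (nat \<Rightarrow> real) \<Rightarrow> nat \<Rightarrow> nat \<Rightarrow> nat \<Rightarrow> real" where
  "Cf l th act act' x n a b = wgt l th n a b * act' (n - 1) (net l th act (n - 1) x b)"

lemma dnet_prop:
  assumes zw: "\<And>m u j. k < m \<Longrightarrow> m \<le> L \<Longrightarrow> u \<in> {1..l m} \<Longrightarrow> j \<in> {1..l (m - 1)} \<Longrightarrow> wgt l h m u j = 0"
    and zb: "\<And>m u. k < m \<Longrightarrow> m \<le> L \<Longrightarrow> u \<in> {1..l m} \<Longrightarrow> bias l h m u = 0"
    and base: "\<And>u. u \<in> {1..l k} \<Longrightarrow> dnet l th act act' k x u h = (if u = i then c else 0)"
    and k: "1 \<le> k" "i \<in> {1..l k}"
  shows "m \<in> {k..L} \<Longrightarrow> u \<in> {1..l m} \<Longrightarrow>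
           dnet l th act act' m x u h = c * Psum l (Cf l th act act' x) k i m u"
proof (induction m arbitrary: u)
  case 0
  then show ?case using k by auto
next
  case (Suc m)
  show ?case
  proof (cases "Suc m = k")
    case True
    then show ?thesis using base[of u] Suc.prems Psum_base[of u l k i] k by auto
  next
    case False
    then have km: "k \<le> m" "Suc m \<le> L" using Suc.prems by auto
    then obtain m' where m': "m = Suc m'" using k by (cases m) auto
    have IH: "j \<in> {1..l m} \<Longrightarrow> dnet l th act act' m x j h = c * Psum l (Cf l th act act' x) k i m j" for j
      using Suc.IH km by auto
    have "dnet l th act act' (Suc m) x u h =
        (\<Sum>j = 1..l m. wgt l th (Suc m) u j * act' m (net l th act m x j) * dnet l th act act' m x j h)"
      using zw[of "Suc m" u] zb[of "Suc m" u] km Suc.prems False unfolding m'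
      by (auto intro!: sum.cong)
    also have "\<dots> = c * (\<Sum>j = 1..l m. Cf l th act act' x (Suc m) u j * Psum l (Cf l th act act' x) k i m j)"
    proof -
      have "Cf l th act act' x (Suc m) u j = wgt l th (Suc m) u j * act' m (net l th act m x j)" for j
        by (simp add: Cf_def)
      then show ?thesis unfolding sum_distrib_left by (intro sum.cong refl) (simp add: IH)
    qed
    also have "\<dots> = c * Psum l (Cf l th act act' x) k i (Suc m) u"
      using Psum_step[OF km(1), of u l] Suc.prems by simp
    finally show ?thesis .
  qed
qed

locale unitdir =
  fixes l :: "nat \<Rightarrow> nat" and L k p :: nat and h :: "nat \<Rightarrow> real"
  assumes H: "\<forall>q\<in>{1..dsum l L}. h q = (if q = p then 1 else 0)"
    and kL: "k \<in> {1..L}"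
    and pk: "dsum l (k - 1) < p" "p \<le> dsum l k"
begin

lemma in_range:
  assumes "1 \<le> m" "m \<le> L" "dsum l (m - 1) < q" "q \<le> dsum l m"
  shows "q \<in> {1..dsum l L}"
  using assms dsum_mono[of m L l] by auto

lemma zero_w:
  assumes "m \<in> {1..L}" "m \<noteq> k" "u \<in> {1..l m}" "j \<in> {1..l (m - 1)}"
  shows "wgt l h m u j = 0"
proof -
  let ?q = "(u - 1) * l (m - 1) + j + dsum l (m - 1)"
  have r: "dsum l (m - 1) < ?q" "?q \<le> dsum l m"
    using windex_layer[of m u l j] assms by auto
  have "?q \<noteq> p" using layer_disj[OF _ _ assms(2) r pk] assms kL by auto
  then show ?thesis using H in_range[OF _ _ r] assms unfolding wgt_def by auto
qed

lemma zero_b: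
  assumes "m \<in> {1..L}" "m \<noteq> k" "u \<in> {1..l m}"
  shows "bias l h m u = 0"
proof -
  let ?q = "l m * l (m - 1) + u + dsum l (m - 1)"
  have r: "dsum l (m - 1) < ?q" "?q \<le> dsum l m"
    using bindex_layer[of m u l] assms by auto
  have "?q \<noteq> p" using layer_disj[OF _ _ assms(2) r pk] assms kL by auto
  then show ?thesis using H in_range[OF _ _ r] assms unfolding bias_def by auto
qed

lemma dnet_below:
  "m < k \<Longrightarrow> u \<in> {1..l m} \<Longrightarrow> dnet l th act act' m x u h = 0"
proof (induction m arbitrary: u rule: less_induct)
  case (less m)
  show ?case
  proof (cases m)
    case 0 then show ?thesis by simp
  next
    case (Suc m1)
    show ?thesis
    proof (cases m1)
      case 0
      then show ?thesis using Suc less.prems kL zero_b[of 1 u] zero_w[of 1 u]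
        by (auto intro!: sum.neutral)
    next
      case (Suc m2)
      have "dnet l th act act' (Suc m2) x j h = 0" if "j \<in> {1..l (Suc m2)}" for j
        using less.IH[of "Suc m2" j] that less.prems \<open>m = Suc m1\<close> Suc by auto
      then show ?thesis using \<open>m = Suc m1\<close> Suc less.prems kL zero_b[of m u] zero_w[of m u]
        by (auto intro!: sum.neutral)
    qed
  qed
qed

end

lemma unit_weight_base:
  assumes H: "\<forall>q\<in>{1..dsum l L}. h q = (if q = p then 1 else 0)"
    and kL: "k \<in> {1..L}" and i: "i \<in> {1..l k}" and j0: "j0 \<in> {1..l (k - 1)}"
    and p: "p = (i - 1) * l (k - 1) + j0 + dsum l (k - 1)"
    and u: "u \<in> {1..l k}"
  shows "dnet l th act act' k x u h =
     (if u = i then (if k = 1 then x j0 else act (k - 1) (net l th act (k - 1) x j0)) else 0)"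
proof -
  have r: "dsum l (k - 1) < p" "p \<le> dsum l k" using windex_layer[of k i l j0] kL i j0 p by auto
  interpret unitdir l L k p h using H kL r by unfold_locales auto
  have bz: "bias l h k u = 0"
  proof -
    let ?q = "l k * l (k - 1) + u + dsum l (k - 1)"
    have "?q \<noteq> p" using bindex_range[of k u l] windex_range[of k i l j0] kL u i j0 p by auto
    moreover have "?q \<in> {1..dsum l L}" using bindex_layer[of k u l] in_range[of k ?q] kL u by auto
    ultimately show ?thesis using H unfolding bias_def by auto
  qed
  have wz: "wgt l h k u j = (if u = i \<and> j = j0 then 1 else 0)" if j: "j \<in> {1..l (k - 1)}" for j
  proof -
    let ?q = "(u - 1) * l (k - 1) + j + dsum l (k - 1)"
    have "?q = p \<longleftrightarrow> u = i \<and> j = j0"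
    proof
      assume "?q = p"
      then have "(u - 1) * l (k - 1) + j = (i - 1) * l (k - 1) + j0" using p by simp
      then have "u - 1 = i - 1 \<and> j = j0" using nat_div_inj[of j "l (k - 1)" j0 "u - 1" "i - 1"] j j0 by auto
      then show "u = i \<and> j = j0" using u i by auto
    qed (use p in auto)
    moreover have "?q \<in> {1..dsum l L}" using windex_layer[of k u l j] in_range[of k ?q] kL u j by auto
    ultimately show ?thesis using H unfolding wgt_def by auto
  qed
  show ?thesis
  proof (cases k)
    case 0 then show ?thesis using kL by simp
  next
    case (Suc k1)
    show ?thesis
    proof (cases k1)
      case 0
      then have "dnet l th act act' k x u h = (\<Sum>j = 1..l 0. (if u = i \<and> j = j0 then 1 else 0) * x j)"
        using Suc bz wz by simp
      also have "\<dots> = (if u = i then x j0 else 0)"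
      proof -
        have e: "\<And>P y. (if P then 1 else 0) * (y::real) = (if P then y else 0)" by simp
        show ?thesis unfolding e using j0 0 Suc by (cases "u = i") (simp_all add: sum.delta')
      qed
      finally show ?thesis using Suc 0 by simp
    next
      case (Suc k2)
      have dz: "dnet l th act act' (Suc k2) x j h = 0" if "j \<in> {1..l (Suc k2)}" for j
        using dnet_below[of "Suc k2" j] that \<open>k = Suc k1\<close> Suc by auto
      have "dnet l th act act' k x u h = (\<Sum>j = 1..l (Suc k2).
           (if u = i \<and> j = j0 then 1 else 0) * act (Suc k2) (net l th act (Suc k2) x j))"
        using \<open>k = Suc k1\<close> Suc bz wz dz by (auto intro!: sum.cong)
      also have "\<dots> = (if u = i then act (Suc k2) (net l th act (Suc k2) x j0) else 0)"
      proof -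
        have e: "\<And>P y. (if P then 1 else 0) * (y::real) = (if P then y else 0)" by simp
        show ?thesis unfolding e using j0 \<open>k = Suc k1\<close> Suc by (cases "u = i") (simp_all add: sum.delta')
      qed
      finally show ?thesis using \<open>k = Suc k1\<close> Suc by simp
    qed
  qed
qed

lemma unit_bias_base:
  assumes H: "\<forall>q\<in>{1..dsum l L}. h q = (if q = p then 1 else 0)"
    and kL: "k \<in> {1..L}" and i: "i \<in> {1..l k}"
    and p: "p = l k * l (k - 1) + i + dsum l (k - 1)"
    and u: "u \<in> {1..l k}"
  shows "dnet l th act act' k x u h = (if u = i then 1 else 0)"
proof -
  have r: "dsum l (k - 1) < p" "p \<le> dsum l k" using bindex_layer[of k i l] kL i p by auto
  interpret unitdir l L k p h using H kL r by unfold_locales auto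
  have bz: "bias l h k u = (if u = i then 1 else 0)"
  proof -
    let ?q = "l k * l (k - 1) + u + dsum l (k - 1)"
    have "?q \<in> {1..dsum l L}" using bindex_layer[of k u l] in_range[of k ?q] kL u by auto
    then show ?thesis using H p unfolding bias_def by auto
  qed
  have wz: "wgt l h k u j = 0" if j: "j \<in> {1..l (k - 1)}" for j
  proof -
    let ?q = "(u - 1) * l (k - 1) + j + dsum l (k - 1)"
    have "?q \<noteq> p" using bindex_range[of k i l] windex_range[of k u l j] kL u i j p by auto
    moreover have "?q \<in> {1..dsum l L}" using windex_layer[of k u l j] in_range[of k ?q] kL u j by auto
    ultimately show ?thesis using H unfolding wgt_def by auto
  qed
  show ?thesis
  proof (cases k)
    case 0 then show ?thesis using kL by simp
  next
    case (Suc k1)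
    show ?thesis
    proof (cases k1)
      case 0
      then show ?thesis using Suc bz wz by simp
    next
      case (Suc k2)
      have dz: "dnet l th act act' (Suc k2) x j h = 0" if "j \<in> {1..l (Suc k2)}" for j
        using dnet_below[of "Suc k2" j] that \<open>k = Suc k1\<close> Suc by auto
      show ?thesis using \<open>k = Suc k1\<close> Suc bz wz dz by simp
    qed
  qed
qed

lemma final_comb:
  assumes kL: "k \<le> L"
  shows "(\<Sum>u\<in>{1..l L}. 2 * D u * (c * Psum l C k i L u)) =
    (\<Sum>v\<in>PiE {k..L} (\<lambda>w. {1..l w}). 2 * c * (indicator {i} (v k) :: real) * D (v L)
        * (\<Prod>n\<in>{k+1..L}. C n (v n) (v (n - 1))))"
proof -
  have "(\<Sum>u\<in>{1..l L}. 2 * D u * (c * Psum l C k i L u)) =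
     (\<Sum>v\<in>PiE {k..L} (\<lambda>w. {1..l w}). \<Sum>u\<in>{1..l L}. 2 * D u * c *
        (if v L = u \<and> v k = i then (\<Prod>n\<in>{k+1..L}. C n (v n) (v (n - 1))) else 0))"
    unfolding Psum_def sum_distrib_left by (subst sum.swap) (simp add: mult.assoc)
  also have "\<dots> = (\<Sum>v\<in>PiE {k..L} (\<lambda>w. {1..l w}). 2 * c * (indicator {i} (v k) :: real) * D (v L)
        * (\<Prod>n\<in>{k+1..L}. C n (v n) (v (n - 1))))"
  proof (intro sum.cong refl)
    fix v assume v: "v \<in> PiE {k..L} (\<lambda>w. {1..l w})"
    then have vL: "v L \<in> {1..l L}" using kL by (auto simp: PiE_def Pi_def)
    show "(\<Sum>u\<in>{1..l L}. 2 * D u * c *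
        (if v L = u \<and> v k = i then (\<Prod>n\<in>{k+1..L}. C n (v n) (v (n - 1))) else 0))
      = 2 * c * (indicator {i} (v k) :: real) * D (v L) * (\<Prod>n\<in>{k+1..L}. C n (v n) (v (n - 1)))"
    proof (cases "v k = i")
      case True
      have "(\<Sum>u\<in>{1..l L}. 2 * D u * c *
        (if v L = u \<and> v k = i then (\<Prod>n\<in>{k+1..L}. C n (v n) (v (n - 1))) else 0))
        = (\<Sum>u\<in>{1..l L}. if v L = u then 2 * D u * c * (\<Prod>n\<in>{k+1..L}. C n (v n) (v (n - 1))) else 0)"
        using True by (intro sum.cong) auto
      also have "\<dots> = 2 * D (v L) * c * (\<Prod>n\<in>{k+1..L}. C n (v n) (v (n - 1)))"
        using vL by (simp add: sum.delta)
      finally show ?thesis using True by simp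
    next
      case False
      then show ?thesis by simp
    qed
  qed
  finally show ?thesis .
qed

lemma dF_weight:
  assumes H: "\<forall>q\<in>{1..dsum l L}. h q = (if q = p then 1 else 0)"
    and kL: "k \<in> {1..L}" and i: "i \<in> {1..l k}" and j0: "j0 \<in> {1..l (k - 1)}"
    and p: "p = (i - 1) * l (k - 1) + j0 + dsum l (k - 1)"
  shows "(\<Sum>u\<in>{1..l L}. 2 * (net l th act L x u - f x u) * dnet l th act act' L x u h) =
    (\<Sum>v\<in>PiE {k..L} (\<lambda>w. {1..l w}).
       2 * (act (max (k - 1) 1) (net l th act (max (k - 1) 1) x j0) * (indicator {1<..L} k :: real)
            + x j0 * (indicator {1} k :: real))
         * (indicator {i} (v k) :: real)
         * (net l th act L x (v L) - f x (v L))
         * (\<Prod>n\<in>{k+1..L}. wgt l th n (v n) (v (n - 1)) * act' (n - 1) (net l th act (n - 1) x (v (n - 1)))))"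
proof -
  have r: "dsum l (k - 1) < p" "p \<le> dsum l k" using windex_layer[of k i l j0] kL i j0 p by auto
  interpret unitdir l L k p h using H kL r by unfold_locales auto
  define c where "c = (if k = 1 then x j0 else act (k - 1) (net l th act (k - 1) x j0))"
  have c_eq: "c = act (max (k - 1) 1) (net l th act (max (k - 1) 1) x j0) * (indicator {1<..L} k :: real)
            + x j0 * (indicator {1} k :: real)"
  proof (cases "k = 1")
    case True then show ?thesis unfolding c_def using kL by (simp add: indicator_def)
  next
    case False
    then have "max (k - 1) 1 = k - 1" using kL by auto
    then show ?thesis unfolding c_def using kL False by (simp add: indicator_def)
  qed
  have dn: "dnet l th act act' L x u h = c * Psum l (Cf l th act act' x) k i L u" if u: "u \<in> {1..l L}" for u
  proof (rule dnet_prop[where L=L])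
    show "wgt l h m u j = 0" if "k < m" "m \<le> L" "u \<in> {1..l m}" "j \<in> {1..l (m - 1)}" for m u j
      using zero_w[of m u j] that kL by auto
    show "bias l h m u = 0" if "k < m" "m \<le> L" "u \<in> {1..l m}" for m u
      using zero_b[of m u] that kL by auto
    show "dnet l th act act' k x u h = (if u = i then c else 0)" if "u \<in> {1..l k}" for u
      using unit_weight_base[OF H kL i j0 p that] unfolding c_def by simp
  qed (use kL i u in auto)
  have "(\<Sum>u\<in>{1..l L}. 2 * (net l th act L x u - f x u) * dnet l th act act' L x u h) =
     (\<Sum>u\<in>{1..l L}. 2 * (net l th act L x u - f x u) * (c * Psum l (Cf l th act act' x) k i L u))"
    by (intro sum.cong refl) (simp add: dn)
  also have "\<dots> = (\<Sum>v\<in>PiE {k..L} (\<lambda>w. {1..l w}). 2 * c * (indicator {i} (v k) :: real) * (net l th act L x (v L) - f x (v L))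
        * (\<Prod>n\<in>{k+1..L}. Cf l th act act' x n (v n) (v (n - 1))))"
    by (rule final_comb[where D="\<lambda>u. net l th act L x u - f x u"]) (use kL in auto)
  finally show ?thesis unfolding c_eq Cf_def by (simp add: mult.assoc)
qed

lemma dF_bias:
  assumes H: "\<forall>q\<in>{1..dsum l L}. h q = (if q = p then 1 else 0)"
    and kL: "k \<in> {1..L}" and i: "i \<in> {1..l k}"
    and p: "p = l k * l (k - 1) + i + dsum l (k - 1)"
  shows "(\<Sum>u\<in>{1..l L}. 2 * (net l th act L x u - f x u) * dnet l th act act' L x u h) =
    (\<Sum>v\<in>PiE {k..L} (\<lambda>w. {1..l w}).
       2 * (indicator {i} (v k) :: real)
         * (net l th act L x (v L) - f x (v L))
         * (\<Prod>n\<in>{k+1..L}. wgt l th n (v n) (v (n - 1)) * act' (n - 1) (net l th act (n - 1) x (v (n - 1)))))"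
proof -
  have r: "dsum l (k - 1) < p" "p \<le> dsum l k" using bindex_layer[of k i l] kL i p by auto
  interpret unitdir l L k p h using H kL r by unfold_locales auto
  have dn: "dnet l th act act' L x u h = 1 * Psum l (Cf l th act act' x) k i L u" if u: "u \<in> {1..l L}" for u
  proof (rule dnet_prop[where L=L])
    show "wgt l h m u j = 0" if "k < m" "m \<le> L" "u \<in> {1..l m}" "j \<in> {1..l (m - 1)}" for m u j
      using zero_w[of m u j] that kL by auto
    show "bias l h m u = 0" if "k < m" "m \<le> L" "u \<in> {1..l m}" for m u
      using zero_b[of m u] that kL by auto
    show "dnet l th act act' k x u h = (if u = i then 1 else 0)" if "u \<in> {1..l k}" for u
      using unit_bias_base[OF H kL i p that] by simp
  qed (use kL i u in auto)
  have "(\<Sum>u\<in>{1..l L}. 2 * (net l th act L x u - f x u) * dnet l th act act' L x u h) =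
     (\<Sum>u\<in>{1..l L}. 2 * (net l th act L x u - f x u) * (1 * Psum l (Cf l th act act' x) k i L u))"
    by (intro sum.cong refl) (simp only: dn)
  also have "\<dots> = (\<Sum>v\<in>PiE {k..L} (\<lambda>w. {1..l w}). 2 * 1 * (indicator {i} (v k) :: real) * (net l th act L x (v L) - f x (v L))
        * (\<Prod>n\<in>{k+1..L}. Cf l th act act' x n (v n) (v (n - 1))))"
    by (rule final_comb[where D="\<lambda>u. net l th act L x u - f x u"]) (use kL in auto)
  finally show ?thesis unfolding Cf_def by (simp add: mult.assoc)
qed

lemma sum_bound:
  fixes w z :: "nat \<Rightarrow> real"
  assumes "\<And>j. j \<in> S \<Longrightarrow> \<bar>w j\<bar> \<le> M" "\<And>j. j \<in> S \<Longrightarrow> \<bar>z j\<bar> \<le> K" "0 \<le> M"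
  shows "\<bar>\<Sum>j\<in>S. w j * z j\<bar> \<le> real (card S) * (M * K)"
proof -
  have "\<bar>\<Sum>j\<in>S. w j * z j\<bar> \<le> (\<Sum>j\<in>S. \<bar>w j\<bar> * \<bar>z j\<bar>)"
    unfolding abs_mult[symmetric] by (rule sum_abs)
  also have "\<dots> \<le> (\<Sum>j\<in>S. M * K)"
  proof (rule sum_mono)
    fix j assume "j \<in> S"
    then show "\<bar>w j\<bar> * \<bar>z j\<bar> \<le> M * K"
      using assms(1)[of j] assms(2)[of j] assms(3) by (intro mult_mono) auto
  qed
  also have "\<dots> = real (card S) * (M * K)" by simp
  finally show ?thesis .
qed

lemma net_bound:
  fixes M ab :: real
  assumes M: "0 \<le> M" and ab: "0 \<le> ab"
  shows "\<exists>K\<ge>0. \<forall>(act::nat \<Rightarrow> real \<Rightarrow> real) (th::nat \<Rightarrow> real) (x::nat \<Rightarrow> real) i. (\<forall>k y. \<bar>act k y\<bar> \<le> \<bar>y\<bar>) \<longrightarrow> (\<forall>p. \<bar>th p\<bar> \<le> M) \<longrightarrow>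
            (\<forall>j\<in>{1..l 0}. \<bar>x j\<bar> \<le> ab) \<longrightarrow> \<bar>net l th act k x i\<bar> \<le> K"
proof (induction k rule: less_induct)
  case (less k)
  show ?case
  proof (cases k)
    case 0 then show ?thesis by auto
  next
    case (Suc k1)
    show ?thesis
    proof (cases k1)
      case 0
      show ?thesis
      proof (intro exI[of _ "M + real (l 0) * (M * ab)"] conjI allI impI)
        show "0 \<le> M + real (l 0) * (M * ab)" using M ab by simp
        fix act :: "nat \<Rightarrow> real \<Rightarrow> real" and th :: "nat \<Rightarrow> real" and x :: "nat \<Rightarrow> real" and i :: nat
        assume a: "\<forall>k y. \<bar>act k y\<bar> \<le> \<bar>y\<bar>" "\<forall>p. \<bar>th p\<bar> \<le> M" "\<forall>j\<in>{1..l 0}. \<bar>x j\<bar> \<le> ab"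
        have "\<bar>\<Sum>j = 1..l 0. wgt l th 1 i j * x j\<bar> \<le> real (card {1..l 0}) * (M * ab)"
        proof (rule sum_bound)
          show "\<bar>wgt l th 1 i j\<bar> \<le> M" for j using a(2) by (simp add: wgt_def)
          show "\<bar>x j\<bar> \<le> ab" if "j \<in> {1..l 0}" for j using a(3) that by blast
          show "0 \<le> M" by fact
        qed
        moreover have "\<bar>bias l th 1 i\<bar> \<le> M" using a(2) by (simp add: bias_def)
        moreover have "net l th act k x i = bias l th 1 i + (\<Sum>j = 1..l 0. wgt l th 1 i j * x j)"
          using Suc 0 by simp
        ultimately show "\<bar>net l th act k x i\<bar> \<le> M + real (l 0) * (M * ab)"
          using abs_triangle_ineq[of "bias l th 1 i" "\<Sum>j = 1..l 0. wgt l th 1 i j * x j"] by simp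
      qed
    next
      case (Suc k2)
      obtain K where K: "K \<ge> 0" "\<forall>(act::nat \<Rightarrow> real \<Rightarrow> real) (th::nat \<Rightarrow> real) (x::nat \<Rightarrow> real) i. (\<forall>k y. \<bar>act k y\<bar> \<le> \<bar>y\<bar>) \<longrightarrow> (\<forall>p. \<bar>th p\<bar> \<le> M) \<longrightarrow>
            (\<forall>j\<in>{1..l 0}. \<bar>x j\<bar> \<le> ab) \<longrightarrow> \<bar>net l th act (Suc k2) x i\<bar> \<le> K"
        using less[of "Suc k2"] \<open>k = Suc k1\<close> Suc by blast
      show ?thesis
      proof (intro exI[of _ "M + real (l (Suc k2)) * (M * K)"] conjI allI impI)
        show "0 \<le> M + real (l (Suc k2)) * (M * K)" using M K by simp
        fix act :: "nat \<Rightarrow> real \<Rightarrow> real" and th :: "nat \<Rightarrow> real" and x :: "nat \<Rightarrow> real" and i :: nat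
        assume a: "\<forall>k y. \<bar>act k y\<bar> \<le> \<bar>y\<bar>" "\<forall>p. \<bar>th p\<bar> \<le> M" "\<forall>j\<in>{1..l 0}. \<bar>x j\<bar> \<le> ab"
        have actb: "\<bar>act (Suc k2) (net l th act (Suc k2) x j)\<bar> \<le> K" for j
        proof -
          have "\<bar>net l th act (Suc k2) x j\<bar> \<le> K" using K(2) a by blast
          then show ?thesis using a(1) order_trans by blast
        qed
        have "\<bar>\<Sum>j = 1..l (Suc k2). wgt l th (Suc (Suc k2)) i j * act (Suc k2) (net l th act (Suc k2) x j)\<bar>
             \<le> real (card {1..l (Suc k2)}) * (M * K)"
          by (rule sum_bound) (use a(2) actb M in \<open>simp_all add: wgt_def\<close>)
        moreover have "\<bar>bias l th (Suc (Suc k2)) i\<bar> \<le> M" using a(2) by (simp add: bias_def)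
        moreover have "net l th act k x i = bias l th (Suc (Suc k2)) i + (\<Sum>j = 1..l (Suc k2). wgt l th (Suc (Suc k2)) i j * act (Suc k2) (net l th act (Suc k2) x j))"
          using \<open>k = Suc k1\<close> Suc by simp
        ultimately show "\<bar>net l th act k x i\<bar> \<le> M + real (l (Suc k2)) * (M * K)"
          using abs_triangle_ineq[of "bias l th (Suc (Suc k2)) i" "\<Sum>j = 1..l (Suc k2). wgt l th (Suc (Suc k2)) i j * act (Suc k2) (net l th act (Suc k2) x j)"] by simp
      qed
    qed
  qed
qed

lemma dnet_bound:
  fixes M ab C :: real
  assumes M: "0 \<le> M" and ab: "0 \<le> ab" and C: "0 \<le> C"
  shows "\<exists>K\<ge>0. \<forall>(act::nat \<Rightarrow> real \<Rightarrow> real) (act'::nat \<Rightarrow> real \<Rightarrow> real) (th::nat \<Rightarrow> real) (x::nat \<Rightarrow> real) i (h::nat \<Rightarrow> real) Hn.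
     (\<forall>k y. \<bar>act k y\<bar> \<le> \<bar>y\<bar>) \<longrightarrow> (\<forall>k y. \<bar>act' k y\<bar> \<le> C) \<longrightarrow> (\<forall>p. \<bar>th p\<bar> \<le> M) \<longrightarrow>
     (\<forall>j\<in>{1..l 0}. \<bar>x j\<bar> \<le> ab) \<longrightarrow> (\<forall>p. \<bar>h p\<bar> \<le> Hn) \<longrightarrow> \<bar>dnet l th act act' k x i h\<bar> \<le> K * Hn"
proof (induction k rule: less_induct)
  case (less k)
  show ?case
  proof (cases k)
    case 0 then show ?thesis by auto
  next
    case (Suc k1)
    show ?thesis
    proof (cases k1)
      case 0
      show ?thesis
      proof (intro exI[of _ "1 + real (l 0) * ab"] conjI allI impI)
        show "0 \<le> 1 + real (l 0) * ab" using ab by simp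
        fix act act' :: "nat \<Rightarrow> real \<Rightarrow> real" and th x h :: "nat \<Rightarrow> real" and i :: nat and Hn :: real
        assume a: "\<forall>k y. \<bar>act k y\<bar> \<le> \<bar>y\<bar>" "\<forall>k y. \<bar>act' k y\<bar> \<le> C" "\<forall>p. \<bar>th p\<bar> \<le> M"
          "\<forall>j\<in>{1..l 0}. \<bar>x j\<bar> \<le> ab" "\<forall>p. \<bar>h p\<bar> \<le> Hn"
        have Hn: "0 \<le> Hn" using a(5) by (meson abs_ge_zero order_trans)
        have "\<bar>\<Sum>j = 1..l 0. wgt l h 1 i j * x j\<bar> \<le> real (card {1..l 0}) * (Hn * ab)"
        proof (rule sum_bound)
          show "\<bar>wgt l h 1 i j\<bar> \<le> Hn" for j using a(5) by (simp add: wgt_def)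
          show "\<bar>x j\<bar> \<le> ab" if "j \<in> {1..l 0}" for j using a(4) that by blast
          show "0 \<le> Hn" by fact
        qed
        moreover have "\<bar>bias l h 1 i\<bar> \<le> Hn" using a(5) by (simp add: bias_def)
        moreover have "dnet l th act act' k x i h = bias l h 1 i + (\<Sum>j = 1..l 0. wgt l h 1 i j * x j)"
          using Suc 0 by simp
        ultimately show "\<bar>dnet l th act act' k x i h\<bar> \<le> (1 + real (l 0) * ab) * Hn"
          using abs_triangle_ineq[of "bias l h 1 i" "\<Sum>j = 1..l 0. wgt l h 1 i j * x j"]
          by (simp add: algebra_simps)
      qed
    next
      case (Suc k2)
      obtain Kd where Kd: "Kd \<ge> 0" "\<forall>(act::nat \<Rightarrow> real \<Rightarrow> real) (act'::nat \<Rightarrow> real \<Rightarrow> real) (th::nat \<Rightarrow> real) (x::nat \<Rightarrow> real) i (h::nat \<Rightarrow> real) Hn.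
     (\<forall>k y. \<bar>act k y\<bar> \<le> \<bar>y\<bar>) \<longrightarrow> (\<forall>k y. \<bar>act' k y\<bar> \<le> C) \<longrightarrow> (\<forall>p. \<bar>th p\<bar> \<le> M) \<longrightarrow>
     (\<forall>j\<in>{1..l 0}. \<bar>x j\<bar> \<le> ab) \<longrightarrow> (\<forall>p. \<bar>h p\<bar> \<le> Hn) \<longrightarrow> \<bar>dnet l th act act' (Suc k2) x i h\<bar> \<le> Kd * Hn"
        using less[of "Suc k2"] \<open>k = Suc k1\<close> Suc by blast
      obtain Kn where Kn: "Kn \<ge> 0" "\<forall>(act::nat \<Rightarrow> real \<Rightarrow> real) (th::nat \<Rightarrow> real) (x::nat \<Rightarrow> real) i. (\<forall>k y. \<bar>act k y\<bar> \<le> \<bar>y\<bar>) \<longrightarrow> (\<forall>p. \<bar>th p\<bar> \<le> M) \<longrightarrow>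
            (\<forall>j\<in>{1..l 0}. \<bar>x j\<bar> \<le> ab) \<longrightarrow> \<bar>net l th act (Suc k2) x i\<bar> \<le> Kn"
        using net_bound[OF M ab, of l "Suc k2"] by blast
      let ?n = "real (l (Suc k2))"
      show ?thesis
      proof (intro exI[of _ "1 + ?n * Kn + ?n * (M * (C * Kd))"] conjI allI impI)
        show "0 \<le> 1 + ?n * Kn + ?n * (M * (C * Kd))" using M C Kd Kn by simp
        fix act act' :: "nat \<Rightarrow> real \<Rightarrow> real" and th x h :: "nat \<Rightarrow> real" and i :: nat and Hn :: real
        assume a: "\<forall>k y. \<bar>act k y\<bar> \<le> \<bar>y\<bar>" "\<forall>k y. \<bar>act' k y\<bar> \<le> C" "\<forall>p. \<bar>th p\<bar> \<le> M"
          "\<forall>j\<in>{1..l 0}. \<bar>x j\<bar> \<le> ab" "\<forall>p. \<bar>h p\<bar> \<le> Hn"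
        have Hn: "0 \<le> Hn" using a(5) by (meson abs_ge_zero order_trans)
        have actb: "\<bar>act (Suc k2) (net l th act (Suc k2) x j)\<bar> \<le> Kn" for j
        proof -
          have "\<bar>net l th act (Suc k2) x j\<bar> \<le> Kn" using Kn(2) a by blast
          then show ?thesis using a(1) order_trans by blast
        qed
        have db: "\<bar>act' (Suc k2) (net l th act (Suc k2) x j) * dnet l th act act' (Suc k2) x j h\<bar> \<le> C * (Kd * Hn)" for j
        proof -
          have "\<bar>dnet l th act act' (Suc k2) x j h\<bar> \<le> Kd * Hn" using Kd(2) a by blast
          then show ?thesis unfolding abs_mult using a(2) C by (intro mult_mono) auto
        qed
        have s1: "\<bar>\<Sum>j = 1..l (Suc k2). wgt l h (Suc (Suc k2)) i j * act (Suc k2) (net l th act (Suc k2) x j)\<bar>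
             \<le> real (card {1..l (Suc k2)}) * (Hn * Kn)"
          by (rule sum_bound) (use a(5) actb Hn in \<open>simp_all add: wgt_def\<close>)
        have s2: "\<bar>\<Sum>j = 1..l (Suc k2). wgt l th (Suc (Suc k2)) i j * (act' (Suc k2) (net l th act (Suc k2) x j) * dnet l th act act' (Suc k2) x j h)\<bar>
             \<le> real (card {1..l (Suc k2)}) * (M * (C * (Kd * Hn)))"
          by (rule sum_bound) (use a(3) db M in \<open>simp_all add: wgt_def\<close>)
        have bb: "\<bar>bias l h (Suc (Suc k2)) i\<bar> \<le> Hn" using a(5) by (simp add: bias_def)
        have eq: "dnet l th act act' k x i h = bias l h (Suc (Suc k2)) i
           + (\<Sum>j = 1..l (Suc k2). wgt l h (Suc (Suc k2)) i j * act (Suc k2) (net l th act (Suc k2) x j))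
           + (\<Sum>j = 1..l (Suc k2). wgt l th (Suc (Suc k2)) i j * (act' (Suc k2) (net l th act (Suc k2) x j) * dnet l th act act' (Suc k2) x j h))"
          using \<open>k = Suc k1\<close> Suc by (simp add: sum.distrib mult.assoc)
        have "\<bar>dnet l th act act' k x i h\<bar> \<le> Hn + ?n * (Hn * Kn) + ?n * (M * (C * (Kd * Hn)))"
          unfolding eq using s1 s2 bb by (simp add: abs_triangle_ineq)
        then show "\<bar>dnet l th act act' k x i h\<bar> \<le> (1 + ?n * Kn + ?n * (M * (C * Kd))) * Hn"
          by (simp add: algebra_simps)
      qed
    qed
  qed
qed

lemma net_meas:
  assumes xm: "\<And>j. (\<lambda>x. x j) \<in> borel_measurable M" and am: "\<And>k. act k \<in> borel_measurable borel"
  shows "(\<lambda>x. net l th act k x i) \<in> borel_measurable M"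
proof (induction k arbitrary: i rule: less_induct)
  case (less k)
  show ?case
  proof (cases k)
    case 0 then show ?thesis by simp
  next
    case (Suc k1)
    show ?thesis
    proof (cases k1)
      case 0 then show ?thesis using Suc xm by simp
    next
      case (Suc k2)
      have "(\<lambda>x. act (Suc k2) (net l th act (Suc k2) x j)) \<in> borel_measurable M" for j
        using measurable_compose[OF less[of "Suc k2" j] am] \<open>k = Suc k1\<close> Suc by simp
      then show ?thesis using \<open>k = Suc k1\<close> Suc by simp
    qed
  qed
qed

lemma dnet_meas:
  assumes xm: "\<And>j. (\<lambda>x. x j) \<in> borel_measurable M" and am: "\<And>k. act k \<in> borel_measurable borel"
    and am': "\<And>k. act' k \<in> borel_measurable borel"
  shows "(\<lambda>x. dnet l th act act' k x i h) \<in> borel_measurable M"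
proof (induction k arbitrary: i rule: less_induct)
  case (less k)
  show ?case
  proof (cases k)
    case 0 then show ?thesis by simp
  next
    case (Suc k1)
    show ?thesis
    proof (cases k1)
      case 0 then show ?thesis using Suc xm by simp
    next
      case (Suc k2)
      have "(\<lambda>x. act (Suc k2) (net l th act (Suc k2) x j)) \<in> borel_measurable M" for j
        using measurable_compose[OF net_meas[OF xm am] am] by simp
      moreover have "(\<lambda>x. act' (Suc k2) (net l th act (Suc k2) x j)) \<in> borel_measurable M" for j
        using measurable_compose[OF net_meas[OF xm am] am'] by simp
      moreover have "(\<lambda>x. dnet l th act act' (Suc k2) x j h) \<in> borel_measurable M" for j
        using less[of "Suc k2" j] \<open>k = Suc k1\<close> Suc by simp
      ultimately show ?thesis using \<open>k = Suc k1\<close> Suc by simp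
    qed
  qed
qed

lemma coords_cont: "continuous_on UNIV (\<lambda>v. coords idx v p)"
  unfolding coords_def by (intro continuous_on_component continuous_on_id)

lemma bias_cont: "continuous_on UNIV (\<lambda>v. bias l (coords idx v) k i)"
  unfolding bias_def by (rule coords_cont)

lemma wgt_cont: "continuous_on UNIV (\<lambda>v. wgt l (coords idx v) k i j)"
  unfolding wgt_def by (rule coords_cont)

lemma net_cont:
  assumes ac: "\<And>k. continuous_on UNIV (act k)"
  shows "continuous_on UNIV (\<lambda>v. net l (coords idx v) act k x i)"
proof (induction k arbitrary: i rule: less_induct)
  case (less k)
  show ?case
  proof (cases k)
    case 0 then show ?thesis by simp
  next
    case (Suc k1)
    show ?thesis
    proof (cases k1)
      case 0 then show ?thesis using Suc 
        by (auto intro!: continuous_intros bias_cont wgt_cont)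
    next
      case (Suc k2)
      have "continuous_on UNIV (\<lambda>v. act (Suc k2) (net l (coords idx v) act (Suc k2) x j))" for j
        using continuous_on_compose2[OF ac less[of "Suc k2" j]] \<open>k = Suc k1\<close> Suc by simp
      then show ?thesis using \<open>k = Suc k1\<close> Suc 
        by (auto intro!: continuous_intros bias_cont wgt_cont)
    qed
  qed
qed

lemma dnet_cont:
  assumes ac: "\<And>k. continuous_on UNIV (act k)" and ac': "\<And>k. continuous_on UNIV (act' k)"
  shows "continuous_on UNIV (\<lambda>v. dnet l (coords idx v) act act' k x i h)"
proof (induction k arbitrary: i rule: less_induct)
  case (less k)
  show ?case
  proof (cases k)
    case 0 then show ?thesis by simp
  next
    case (Suc k1)
    show ?thesis
    proof (cases k1)
      case 0 then show ?thesis using Suc by simp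
    next
      case (Suc k2)
      have "continuous_on UNIV (\<lambda>v. act (Suc k2) (net l (coords idx v) act (Suc k2) x j))" for j
        using continuous_on_compose2[OF ac net_cont[OF ac]] by simp
      moreover have "continuous_on UNIV (\<lambda>v. act' (Suc k2) (net l (coords idx v) act (Suc k2) x j))" for j
        using continuous_on_compose2[OF ac' net_cont[OF ac]] by simp
      moreover have "continuous_on UNIV (\<lambda>v. dnet l (coords idx v) act act' (Suc k2) x j h)" for j
        using less[of "Suc k2" j] \<open>k = Suc k1\<close> Suc by simp
      ultimately show ?thesis using \<open>k = Suc k1\<close> Suc 
        by (auto intro!: continuous_intros wgt_cont)
    qed
  qed
qed

lemma C1_facts:
  fixes g :: "real \<Rightarrow> real"
  assumes "g C1_differentiable_on UNIV"
  shows "(g has_real_derivative deriv g y) (at y)" "continuous_on UNIV (deriv g)"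
proof -
  have d: "g differentiable at x" and c: "continuous_on UNIV (\<lambda>x. vector_derivative g (at x))" for x
    using assms unfolding C1_differentiable_on_eq by auto
  show dd: "(g has_real_derivative deriv g y) (at y)" for y
    using d DERIV_deriv_iff_real_differentiable by blast
  have "vector_derivative g (at x) = deriv g x" for x
    using dd[of x] by (intro vector_derivative_at) (simp add: has_real_derivative_iff_has_vector_derivative)
  then show "continuous_on UNIV (deriv g)" using c by (simp add: fun_eq_iff[symmetric] ext)
qed

lemma prod_bound:
  fixes g :: "nat \<Rightarrow> real"
  assumes "\<And>n. n \<in> S \<Longrightarrow> \<bar>g n\<bar> \<le> Bd"
  shows "\<bar>\<Prod>n\<in>S. g n\<bar> \<le> Bd ^ card S"
proof -
  have "\<bar>\<Prod>n\<in>S. g n\<bar> = (\<Prod>n\<in>S. \<bar>g n\<bar>)" by (rule abs_prod)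
  also have "\<dots> \<le> (\<Prod>n\<in>S. Bd)" using assms by (intro prod_mono) auto
  also have "\<dots> = Bd ^ card S" by simp
  finally show ?thesis .
qed

locale NN =
  fixes L :: nat and l :: "nat \<Rightarrow> nat" and a b A B :: real
    and idx :: "nat \<Rightarrow> 'd::finite"
    and R :: "real \<Rightarrow> real \<Rightarrow> real"
    and \<mu> :: "(nat \<Rightarrow> real) measure"
    and f :: "(nat \<Rightarrow> real) \<Rightarrow> nat \<Rightarrow> real"
  assumes L_pos: "1 \<le> L"
    and l_pos: "\<forall>k. 1 \<le> l k"
    and ab: "a < b"
    and AB: "0 < A" "A < B"
    and idx_bij: "bij_betw idx {1..dsum l L} UNIV"
    and R_C1: "\<forall>r\<ge>1. R r C1_differentiable_on UNIV"
    and R_zero: "\<forall>r\<ge>1. \<forall>x. x \<le> A / r \<longrightarrow> R r x = 0"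
    and R_bounds: "\<forall>r\<ge>1. \<forall>y. 0 \<le> R r y \<and> R r y \<le> max y 0"
    and R_id: "\<forall>r\<ge>1. \<forall>z. B / r \<le> z \<longrightarrow> R r z = z"
    and R_deriv_bdd: "\<exists>C. \<forall>r\<ge>1. \<forall>x. \<bar>deriv (R r) x\<bar> \<le> C"
    and mu_sets: "sets \<mu> = sets (restrict_space borel (PiE {1..l 0} (\<lambda>_. {a..b})))"
    and mu_finite: "emeasure \<mu> (space \<mu>) < \<infinity>"
    and f_meas: "\<forall>i\<in>{1..l L}. (\<lambda>x. f x i) \<in> borel_measurable \<mu>"
    and int_r: "\<forall>r\<ge>1. \<forall>\<phi>. integrable \<mu>
                  (\<lambda>x. \<Sum>i = 1..l L. (net l (coords idx \<phi>) (actR R r) L x i - f x i)\<^sup>2)"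
    and int_inf: "\<forall>\<phi>. integrable \<mu>
                  (\<lambda>x. \<Sum>i = 1..l L. (net l (coords idx \<phi>) actInf L x i - f x i)\<^sup>2)"
begin

definition abv :: real where "abv = max \<bar>a\<bar> \<bar>b\<bar>"

lemma abv_nonneg: "0 \<le> abv" unfolding abv_def by simp

lemma space_mu: "space \<mu> = PiE {1..l 0} (\<lambda>_. {a..b})"
  using sets_eq_imp_space_eq[OF mu_sets] by (simp add: space_restrict_space)

lemma x_bound: "x \<in> space \<mu> \<Longrightarrow> \<forall>j\<in>{1..l 0}. \<bar>x j\<bar> \<le> abv"
  unfolding space_mu abv_def by (auto simp: PiE_def Pi_def)

lemma xm: "(\<lambda>x. x j) \<in> borel_measurable \<mu>"
proof -
  have "(\<lambda>x::nat \<Rightarrow> real. x j) \<in> borel_measurable borel"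
    by (rule borel_measurable_continuous_onI) simp
  then have "(\<lambda>x::nat \<Rightarrow> real. x j) \<in> borel_measurable (restrict_space borel (PiE {1..l 0} (\<lambda>_. {a..b})))"
    by (rule measurable_restrict_space1)
  then show ?thesis by (subst measurable_cong_sets[OF mu_sets refl])
qed

lemma fin: "finite_measure \<mu>"
  using mu_finite by (intro finite_measureI) auto

lemma s_ge1: "1 \<le> r \<Longrightarrow> 1 \<le> r powr (1 / real k)"
  by (rule ge_one_powr_ge_zero) auto

lemma R_facts:
  assumes s: "1 \<le> s"
  shows "(R s has_real_derivative deriv (R s) y) (at y)" "continuous_on UNIV (deriv (R s))"
    "continuous_on UNIV (R s)" "\<bar>R s y\<bar> \<le> \<bar>y\<bar>"
proof -
  show d: "(R s has_real_derivative deriv (R s) y) (at y)" for y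
    using C1_facts(1) R_C1 s by blast
  show "continuous_on UNIV (deriv (R s))" using C1_facts(2) R_C1 s by blast
  show "continuous_on UNIV (R s)"
    using d by (intro continuous_at_imp_continuous_on) (auto intro: DERIV_isCont)
  show "\<bar>R s y\<bar> \<le> \<bar>y\<bar>" using R_bounds s by (smt (verit))
qed

definition Cd :: real where "Cd = max 0 (SOME C. \<forall>r\<ge>1. \<forall>x. \<bar>deriv (R r) x\<bar> \<le> C)"

lemma Cd: "0 \<le> Cd" "1 \<le> s \<Longrightarrow> \<bar>deriv (R s) y\<bar> \<le> Cd"
proof -
  show "0 \<le> Cd" unfolding Cd_def by simp
  have "\<forall>r\<ge>1. \<forall>x. \<bar>deriv (R r) x\<bar> \<le> (SOME C. \<forall>r\<ge>1. \<forall>x. \<bar>deriv (R r) x\<bar> \<le> C)"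
    using someI_ex[OF R_deriv_bdd] .
  then show "1 \<le> s \<Longrightarrow> \<bar>deriv (R s) y\<bar> \<le> Cd" unfolding Cd_def by (meson max.coboundedI2 order_trans)
qed

definition actD :: "real \<Rightarrow> nat \<Rightarrow> real \<Rightarrow> real" where
  "actD r k = deriv (R (r powr (1 / real k)))"

lemma actR_facts:
  assumes r: "1 \<le> r"
  shows "(actR R r k has_real_derivative actD r k y) (at y)"
    "continuous_on UNIV (actR R r k)" "continuous_on UNIV (actD r k)"
    "\<bar>actR R r k y\<bar> \<le> \<bar>y\<bar>" "\<bar>actD r k y\<bar> \<le> Cd"
  using R_facts[OF s_ge1[OF r, of k]] Cd(2)[OF s_ge1[OF r, of k]]
  unfolding actR_def actD_def by auto

lemma actInf_facts: "continuous_on UNIV (actInf k)" "\<bar>actInf k y\<bar> \<le> \<bar>y\<bar>"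
  unfolding actInf_def relu_def by (auto intro!: continuous_intros)

lemma coords_bound: "\<bar>coords idx v p\<bar> \<le> norm v"
  unfolding coords_def by (rule component_le_norm_cart)

end

context NN
begin

lemma absq: "\<bar>t::real\<bar> \<le> 1 + t\<^sup>2"
proof -
  have "0 \<le> (\<bar>t\<bar> - 1)\<^sup>2" by simp
  then have "0 \<le> t\<^sup>2 - 2 * \<bar>t\<bar> + 1" by (simp add: power2_diff)
  moreover have "0 \<le> t\<^sup>2" by simp
  ultimately show ?thesis by linarith
qed

lemma actR_meas: "1 \<le> r \<Longrightarrow> actR R r k \<in> borel_measurable borel"
  using actR_facts(2) by (intro borel_measurable_continuous_onI) auto

lemma actD_meas: "1 \<le> r \<Longrightarrow> actD r k \<in> borel_measurable borel"
  using actR_facts(3) by (intro borel_measurable_continuous_onI) auto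

lemma actInf_meas: "actInf k \<in> borel_measurable borel"
  using actInf_facts(1) by (intro borel_measurable_continuous_onI) auto

lemma net_bnd:
  assumes "\<And>k y. \<bar>act k y\<bar> \<le> \<bar>y\<bar>"
  obtains K where "K \<ge> 0" "\<And>x i. x \<in> space \<mu> \<Longrightarrow> \<bar>net l (coords idx v) act k x i\<bar> \<le> K"
proof -
  obtain K where K: "K \<ge> 0" "\<forall>(act::nat \<Rightarrow> real \<Rightarrow> real) (th::nat \<Rightarrow> real) (x::nat \<Rightarrow> real) i. (\<forall>k y. \<bar>act k y\<bar> \<le> \<bar>y\<bar>) \<longrightarrow> (\<forall>p. \<bar>th p\<bar> \<le> norm v) \<longrightarrow>
            (\<forall>j\<in>{1..l 0}. \<bar>x j\<bar> \<le> abv) \<longrightarrow> \<bar>net l th act k x i\<bar> \<le> K"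
    using net_bound[OF norm_ge_zero abv_nonneg, where l=l and k=k] by blast
  show ?thesis
  proof (rule that[OF K(1)])
    fix x i assume x: "x \<in> space \<mu>"
    have a1: "\<forall>k y. \<bar>act k y\<bar> \<le> \<bar>y\<bar>" using assms by simp
    have a2: "\<forall>p. \<bar>coords idx v p\<bar> \<le> norm v" using coords_bound by simp
    show "\<bar>net l (coords idx v) act k x i\<bar> \<le> K"
      using K(2)[rule_format, OF a1[rule_format] a2[rule_format] x_bound[OF x, rule_format]] .
  qed
qed

lemma net_int:
  assumes "\<And>k. act k \<in> borel_measurable borel" "\<And>k y. \<bar>act k y\<bar> \<le> \<bar>y\<bar>"
  shows "integrable \<mu> (\<lambda>x. net l (coords idx v) act k x i)"
proof -
  obtain K where K: "K \<ge> 0" "\<And>x i. x \<in> space \<mu> \<Longrightarrow> \<bar>net l (coords idx v) act k x i\<bar> \<le> K"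
    by (rule net_bnd[where act=act and v=v and k=k, OF assms(2)]) blast
  show ?thesis
  proof (rule finite_measure.integrable_const_bound[OF fin, where B=K])
    show "AE x in \<mu>. norm (net l (coords idx v) act k x i) \<le> K"
      by (rule AE_I2) (use K(2) in simp)
    show "(\<lambda>x. net l (coords idx v) act k x i) \<in> borel_measurable \<mu>"
      by (rule net_meas[OF xm assms(1)])
  qed
qed

lemma diff_int:
  assumes sq: "integrable \<mu> (\<lambda>x. \<Sum>i = 1..l L. (N x i - f x i)\<^sup>2)"
    and Nm: "\<And>i. (\<lambda>x. N x i) \<in> borel_measurable \<mu>"
    and u: "u \<in> {1..l L}"
  shows "integrable \<mu> (\<lambda>x. N x u - f x u)"
proof -
  have fm: "(\<lambda>x. f x u) \<in> borel_measurable \<mu>" using f_meas u by auto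
  have sqi: "integrable \<mu> (\<lambda>x. (N x u - f x u)\<^sup>2)"
  proof (rule Bochner_Integration.integrable_bound[OF sq])
    show "(\<lambda>x. (N x u - f x u)\<^sup>2) \<in> borel_measurable \<mu>"
      by (intro borel_measurable_power borel_measurable_diff Nm fm)
    show "AE x in \<mu>. norm ((N x u - f x u)\<^sup>2) \<le> norm (\<Sum>i = 1..l L. (N x i - f x i)\<^sup>2)"
    proof (rule AE_I2)
      fix x
      have "(N x u - f x u)\<^sup>2 \<le> (\<Sum>i = 1..l L. (N x i - f x i)\<^sup>2)"
        using u by (intro member_le_sum) simp_all
      moreover have "0 \<le> (\<Sum>i = 1..l L. (N x i - f x i)\<^sup>2)" by (intro sum_nonneg) simp
      ultimately show "norm ((N x u - f x u)\<^sup>2) \<le> norm (\<Sum>i = 1..l L. (N x i - f x i)\<^sup>2)" by simp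
    qed
  qed
  have one: "integrable \<mu> (\<lambda>x. 1 + (N x u - f x u)\<^sup>2)"
    by (rule Bochner_Integration.integrable_add[OF finite_measure.integrable_const[OF fin] sqi])
  show ?thesis
  proof (rule Bochner_Integration.integrable_bound[OF one])
    show "(\<lambda>x. N x u - f x u) \<in> borel_measurable \<mu>"
      by (intro borel_measurable_diff Nm fm)
    show "AE x in \<mu>. norm (N x u - f x u) \<le> norm (1 + (N x u - f x u)\<^sup>2)"
    proof (rule AE_I2)
      fix x
      have "\<bar>N x u - f x u\<bar> \<le> 1 + (N x u - f x u)\<^sup>2"
        by (rule absq)
      then show "norm (N x u - f x u) \<le> norm (1 + (N x u - f x u)\<^sup>2)" by simp
    qed
  qed
qed

lemma f_int:
  assumes u: "u \<in> {1..l L}"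
  shows "integrable \<mu> (\<lambda>x. f x u)"
proof -
  have d: "integrable \<mu> (\<lambda>x. net l (coords idx 0) actInf L x u - f x u)"
    by (rule diff_int[OF int_inf[rule_format, of 0] _ u])
       (rule net_meas[OF xm actInf_meas])
  have n: "integrable \<mu> (\<lambda>x. net l (coords idx 0) actInf L x u)"
    by (rule net_int[OF actInf_meas actInf_facts(2)])
  have "integrable \<mu> (\<lambda>x. net l (coords idx 0) actInf L x u - (net l (coords idx 0) actInf L x u - f x u))"
    by (rule Bochner_Integration.integrable_diff[OF n d])
  then show ?thesis by simp
qed

end

context NN
begin

lemma net_bnd2:
  assumes M: "0 \<le> M"
  obtains K where "K \<ge> 0" "\<And>act v x i. (\<And>k y. \<bar>act k y\<bar> \<le> \<bar>y\<bar>) \<Longrightarrow> norm v \<le> M \<Longrightarrow> x \<in> space \<mu> \<Longrightarrow>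
     \<bar>net l (coords idx v) act k x i\<bar> \<le> K"
proof -
  obtain K where K: "K \<ge> 0" "\<forall>(act::nat \<Rightarrow> real \<Rightarrow> real) (th::nat \<Rightarrow> real) (x::nat \<Rightarrow> real) i. (\<forall>k y. \<bar>act k y\<bar> \<le> \<bar>y\<bar>) \<longrightarrow> (\<forall>p. \<bar>th p\<bar> \<le> M) \<longrightarrow>
            (\<forall>j\<in>{1..l 0}. \<bar>x j\<bar> \<le> abv) \<longrightarrow> \<bar>net l th act k x i\<bar> \<le> K"
    using net_bound[OF M abv_nonneg, where l=l and k=k] by blast
  show ?thesis
  proof (rule that[OF K(1)])
    fix act :: "nat \<Rightarrow> real \<Rightarrow> real" and v :: "real^'d" and x i
    assume a: "\<And>k y. \<bar>act k y\<bar> \<le> \<bar>y\<bar>" and v: "norm v \<le> M" and x: "x \<in> space \<mu>"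
    have a1: "\<forall>k y. \<bar>act k y\<bar> \<le> \<bar>y\<bar>" using a by simp
    have a2: "\<forall>p. \<bar>coords idx v p\<bar> \<le> M" using coords_bound v order_trans by blast
    show "\<bar>net l (coords idx v) act k x i\<bar> \<le> K"
      using K(2)[rule_format, OF a1[rule_format] a2[rule_format] x_bound[OF x, rule_format]] .
  qed
qed

lemma dnet_bnd2:
  assumes M: "0 \<le> M"
  obtains K where "K \<ge> 0" "\<And>act act' v x i h. (\<And>k y. \<bar>act k y\<bar> \<le> \<bar>y\<bar>) \<Longrightarrow> (\<And>k y. \<bar>act' k y\<bar> \<le> Cd) \<Longrightarrow>
     norm v \<le> M \<Longrightarrow> x \<in> space \<mu> \<Longrightarrow>
     \<bar>dnet l (coords idx v) act act' k x i (coords idx h)\<bar> \<le> K * norm h"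
proof -
  obtain K where K: "K \<ge> 0" "\<forall>(act::nat \<Rightarrow> real \<Rightarrow> real) (act'::nat \<Rightarrow> real \<Rightarrow> real) (th::nat \<Rightarrow> real) (x::nat \<Rightarrow> real) i (h::nat \<Rightarrow> real) Hn.
     (\<forall>k y. \<bar>act k y\<bar> \<le> \<bar>y\<bar>) \<longrightarrow> (\<forall>k y. \<bar>act' k y\<bar> \<le> Cd) \<longrightarrow> (\<forall>p. \<bar>th p\<bar> \<le> M) \<longrightarrow>
     (\<forall>j\<in>{1..l 0}. \<bar>x j\<bar> \<le> abv) \<longrightarrow> (\<forall>p. \<bar>h p\<bar> \<le> Hn) \<longrightarrow> \<bar>dnet l th act act' k x i h\<bar> \<le> K * Hn"
    using dnet_bound[OF M abv_nonneg Cd(1), where l=l and k=k] by blast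
  show ?thesis
  proof (rule that[OF K(1)])
    fix act act' :: "nat \<Rightarrow> real \<Rightarrow> real" and v h :: "real^'d" and x i
    assume a: "\<And>k y. \<bar>act k y\<bar> \<le> \<bar>y\<bar>" and a': "\<And>k y. \<bar>act' k y\<bar> \<le> Cd"
      and v: "norm v \<le> M" and x: "x \<in> space \<mu>"
    have a1: "\<forall>k y. \<bar>act k y\<bar> \<le> \<bar>y\<bar>" using a by simp
    have a1': "\<forall>k y. \<bar>act' k y\<bar> \<le> Cd" using a' by simp
    have a2: "\<forall>p. \<bar>coords idx v p\<bar> \<le> M" using coords_bound v order_trans by blast
    have a3: "\<forall>p. \<bar>coords idx h p\<bar> \<le> norm h" using coords_bound by blast
    show "\<bar>dnet l (coords idx v) act act' k x i (coords idx h)\<bar> \<le> K * norm h"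
      using K(2)[rule_format, OF a1[rule_format] a1'[rule_format] a2[rule_format] x_bound[OF x, rule_format] a3[rule_format]] .
  qed
qed

definition Fr :: "real \<Rightarrow> real^'d \<Rightarrow> (nat \<Rightarrow> real) \<Rightarrow> real" where
  "Fr r v x = (\<Sum>u = 1..l L. (net l (coords idx v) (actR R r) L x u - f x u)\<^sup>2)"

definition Fr' :: "real \<Rightarrow> real^'d \<Rightarrow> (nat \<Rightarrow> real) \<Rightarrow> real^'d \<Rightarrow> real" where
  "Fr' r v x h = (\<Sum>u = 1..l L. 2 * (net l (coords idx v) (actR R r) L x u - f x u)
       * dnet l (coords idx v) (actR R r) (actD r) L x u (coords idx h))"

lemma Fr_deriv:
  assumes r: "1 \<le> r"
  shows "((\<lambda>v. Fr r v x) has_derivative Fr' r v x) (at v)"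
proof -
  have nd: "((\<lambda>v. net l (coords idx v) (actR R r) L x u) has_derivative
           (\<lambda>h. dnet l (coords idx v) (actR R r) (actD r) L x u (coords idx h))) (at v)" for u
    by (rule net_deriv) (rule actR_facts(1)[OF r])
  show ?thesis unfolding Fr_def Fr'_def
    by (auto intro!: derivative_eq_intros nd simp: fun_eq_iff sum_distrib_left algebra_simps)
qed

lemma Fr'_meas:
  assumes r: "1 \<le> r"
  shows "(\<lambda>x. Fr' r v x h) \<in> borel_measurable \<mu>"
proof -
  have "(\<lambda>x. net l (coords idx v) (actR R r) L x u) \<in> borel_measurable \<mu>" for u
    by (rule net_meas[OF xm actR_meas[OF r]])
  moreover have "(\<lambda>x. dnet l (coords idx v) (actR R r) (actD r) L x u (coords idx h)) \<in> borel_measurable \<mu>" for u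
    by (rule dnet_meas[OF xm actR_meas[OF r] actD_meas[OF r]])
  moreover have "u \<in> {1..l L} \<Longrightarrow> (\<lambda>x. f x u) \<in> borel_measurable \<mu>" for u using f_meas by blast
  ultimately show ?thesis unfolding Fr'_def
    by (intro borel_measurable_sum borel_measurable_times borel_measurable_diff borel_measurable_const) auto
qed

lemma Fr'_cont:
  assumes r: "1 \<le> r"
  shows "continuous_on UNIV (\<lambda>v. Fr' r v x h)"
proof -
  have "continuous_on UNIV (\<lambda>v. net l (coords idx v) (actR R r) L x u)" for u
    by (rule net_cont) (rule actR_facts(2)[OF r])
  moreover have "continuous_on UNIV (\<lambda>v. dnet l (coords idx v) (actR R r) (actD r) L x u (coords idx h))" for u
    by (rule dnet_cont) (rule actR_facts(2)[OF r], rule actR_facts(3)[OF r])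
  ultimately show ?thesis unfolding Fr'_def
    by (intro continuous_intros) auto
qed

lemma Fr'_bound:
  assumes r: "1 \<le> r"
  shows "\<exists>e>0. \<exists>g. integrable \<mu> g \<and> (\<forall>v\<in>ball v0 e. \<forall>x\<in>space \<mu>. \<forall>h. \<bar>Fr' r v x h\<bar> \<le> g x * norm h)"
proof -
  define M where "M = norm v0 + 1"
  have M: "0 \<le> M" unfolding M_def by simp
  obtain Kn where Kn: "Kn \<ge> 0" "\<And>act v x i. (\<And>k y. \<bar>act k y\<bar> \<le> \<bar>y\<bar>) \<Longrightarrow> norm v \<le> M \<Longrightarrow> x \<in> space \<mu> \<Longrightarrow>
     \<bar>net l (coords idx v) act L x i\<bar> \<le> Kn"
    by (rule net_bnd2[OF M, where k=L]) blast
  obtain Kd where Kd: "Kd \<ge> 0" "\<And>act act' v x i h. (\<And>k y. \<bar>act k y\<bar> \<le> \<bar>y\<bar>) \<Longrightarrow> (\<And>k y. \<bar>act' k y\<bar> \<le> Cd) \<Longrightarrow>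
     norm v \<le> M \<Longrightarrow> x \<in> space \<mu> \<Longrightarrow>
     \<bar>dnet l (coords idx v) act act' L x i (coords idx h)\<bar> \<le> Kd * norm h"
    by (rule dnet_bnd2[OF M, where k=L]) blast
  define g where "g x = (\<Sum>u = 1..l L. 2 * (Kn + \<bar>f x u\<bar>) * Kd)" for x
  have gi: "integrable \<mu> g"
    unfolding g_def using f_int finite_measure.integrable_const[OF fin]
    by (intro Bochner_Integration.integrable_sum Bochner_Integration.integrable_mult_left
        Bochner_Integration.integrable_mult_right Bochner_Integration.integrable_add integrable_abs) auto
  have "\<bar>Fr' r v x h\<bar> \<le> g x * norm h" if v: "v \<in> ball v0 1" and x: "x \<in> space \<mu>" for v x h
  proof -
    have nv: "norm v \<le> M" using v unfolding M_def
      by (metis add.commute dist_norm mem_ball norm_minus_commute norm_triangle_sub order.strict_implies_order order_trans add_le_cancel_left)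
    have "\<bar>Fr' r v x h\<bar> \<le> (\<Sum>u = 1..l L. \<bar>2 * (net l (coords idx v) (actR R r) L x u - f x u)
       * dnet l (coords idx v) (actR R r) (actD r) L x u (coords idx h)\<bar>)"
      unfolding Fr'_def by (rule sum_abs)
    also have "\<dots> \<le> (\<Sum>u = 1..l L. 2 * (Kn + \<bar>f x u\<bar>) * (Kd * norm h))"
    proof (rule sum_mono)
      fix u
      have n: "\<bar>net l (coords idx v) (actR R r) L x u\<bar> \<le> Kn"
        using Kn(2)[OF actR_facts(4)[OF r] nv x] .
      have d: "\<bar>dnet l (coords idx v) (actR R r) (actD r) L x u (coords idx h)\<bar> \<le> Kd * norm h"
        using Kd(2)[OF actR_facts(4)[OF r] actR_facts(5)[OF r] nv x] .
      have "\<bar>net l (coords idx v) (actR R r) L x u - f x u\<bar> \<le> Kn + \<bar>f x u\<bar>"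
        using n by (smt (verit))
      then show "\<bar>2 * (net l (coords idx v) (actR R r) L x u - f x u)
         * dnet l (coords idx v) (actR R r) (actD r) L x u (coords idx h)\<bar> \<le> 2 * (Kn + \<bar>f x u\<bar>) * (Kd * norm h)"
        unfolding abs_mult using d by (intro mult_mono) auto
    qed
    also have "\<dots> = g x * norm h" unfolding g_def sum_distrib_right by (simp add: algebra_simps)
    finally show ?thesis .
  qed
  then show ?thesis using gi by (intro exI[of _ 1]) auto
qed

lemma loss_C1:
  assumes r: "1 \<le> r"
  shows "\<exists>D :: (real^'d) \<Rightarrow> ((real^'d) \<Rightarrow>\<^sub>L real).
        (\<forall>v. ((\<lambda>u. loss l L \<mu> f (actR R r) (coords idx u)) has_derivative blinfun_apply (D v)) (at v))
        \<and> continuous_on UNIV D \<and> (\<forall>v h. D v h = (\<integral>x. Fr' r v x h \<partial>\<mu>))"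
proof -
  have eq: "(\<lambda>u. loss l L \<mu> f (actR R r) (coords idx u)) = (\<lambda>v. \<integral>x. Fr r v x \<partial>\<mu>)"
    unfolding loss_def Fr_def by simp
  show ?thesis unfolding eq
  proof (rule param_C1)
    show "((\<lambda>v. Fr r v x) has_derivative Fr' r v x) (at v)" for v x by (rule Fr_deriv[OF r])
    show "(\<lambda>x. Fr' r v x h) \<in> borel_measurable \<mu>" for v h by (rule Fr'_meas[OF r])
    show "integrable \<mu> (Fr r v)" for v
      using int_r r unfolding Fr_def by blast
    show "continuous_on UNIV (\<lambda>v. Fr' r v x h)" for x h by (rule Fr'_cont[OF r])
    show "\<exists>e>0. \<exists>g. integrable \<mu> g \<and> (\<forall>v\<in>ball v0 e. \<forall>x\<in>space \<mu>. \<forall>h. \<bar>Fr' r v x h\<bar> \<le> g x * norm h)" for v0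
      by (rule Fr'_bound[OF r])
  qed
qed

end

lemma blin_inner:
  fixes D :: "(real^'n) \<Rightarrow>\<^sub>L real"
  shows "blinfun_apply D h = (\<chi> q. D (axis q 1)) \<bullet> h"
proof -
  have "blinfun_apply D h = blinfun_apply D (\<Sum>q\<in>UNIV. h $ q *\<^sub>R axis q 1)"
    using basis_expansion[of h] by (simp add: scalar_mult_eq_scaleR)
  also have "\<dots> = (\<Sum>q\<in>UNIV. h $ q * D (axis q 1))"
    by (simp add: blinfun.sum_right blinfun.scaleR_right)
  also have "\<dots> = (\<chi> q. D (axis q 1)) \<bullet> h"
    by (simp add: inner_vec_def mult.commute)
  finally show ?thesis .
qed

lemma grad_eq:
  fixes F :: "(real^'n) \<Rightarrow> real" and D :: "(real^'n) \<Rightarrow>\<^sub>L real"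
  assumes d: "(F has_derivative blinfun_apply D) (at x)"
  shows "grad F x = (\<chi> q. D (axis q 1))"
proof -
  define g0 where "g0 = (\<chi> q. D (axis q 1))"
  have e: "blinfun_apply D = (\<lambda>h. g0 \<bullet> h)" unfolding g0_def by (rule ext) (rule blin_inner)
  have dg: "(F has_derivative (\<lambda>h. g0 \<bullet> h)) (at x)"
    using d unfolding e .
  show ?thesis unfolding grad_def g0_def[symmetric]
  proof (rule the_equality)
    show "(F has_derivative (\<lambda>h. g0 \<bullet> h)) (at x)" by (rule dg)
    fix g' assume g': "(F has_derivative (\<lambda>h. g' \<bullet> h)) (at x)"
    have eq: "(\<lambda>h. g' \<bullet> h) = (\<lambda>h. g0 \<bullet> h)" by (rule has_derivative_unique[OF g' dg])
    have "g' $ q = g0 $ q" for q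
    proof -
      have "g' \<bullet> axis q 1 = g0 \<bullet> axis q 1" using fun_cong[OF eq, of "axis q 1"] .
      then show ?thesis by (simp only: inner_axis inner_real_def mult_1_right)
    qed
    then show "g' = g0" by (simp only: vec_eq_iff) blast
  qed
qed

lemma dir_deriv:
  fixes F :: "(real^'n) \<Rightarrow> real" and D :: "(real^'n) \<Rightarrow>\<^sub>L real"
  assumes d: "(F has_derivative blinfun_apply D) (at x)"
  shows "((\<lambda>t. F (x + t *\<^sub>R e)) has_real_derivative D e) (at 0)"
proof -
  have g: "((\<lambda>t::real. x + t *\<^sub>R e) has_derivative (\<lambda>t. t *\<^sub>R e)) (at 0)"
    by (auto intro!: derivative_eq_intros)
  have "((F \<circ> (\<lambda>t::real. x + t *\<^sub>R e)) has_derivative (blinfun_apply D \<circ> (\<lambda>t. t *\<^sub>R e))) (at 0)"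
    by (rule diff_chain_at[OF g]) (use d in simp)
  then have "((\<lambda>t. F (x + t *\<^sub>R e)) has_derivative (\<lambda>t. D e * t)) (at 0)"
    by (simp add: comp_def blinfun.scaleR_right mult.commute)
  then show ?thesis by (simp add: has_field_derivative_def)
qed

context NN
begin

definition actIndic :: "nat \<Rightarrow> real \<Rightarrow> real" where "actIndic k y = (if 0 < y then 1 else 0)"

definition Cb :: real where "Cb = max Cd 1"

lemma Cb: "0 \<le> Cb" "1 \<le> Cb" "Cd \<le> Cb" unfolding Cb_def by auto

definition cW :: "(nat \<Rightarrow> real \<Rightarrow> real) \<Rightarrow> (nat \<Rightarrow> real) \<Rightarrow> nat \<Rightarrow> nat \<Rightarrow> (nat \<Rightarrow> real) \<Rightarrow> real" where
  "cW act th k j x = act (max (k - 1) 1) (net l th act (max (k - 1) 1) x j) * (indicator {1<..L} k :: real)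
     + x j * (indicator {1} k :: real)"

definition PP :: "(nat \<Rightarrow> real \<Rightarrow> real) \<Rightarrow> (nat \<Rightarrow> real \<Rightarrow> real) \<Rightarrow> (nat \<Rightarrow> real) \<Rightarrow> nat \<Rightarrow> (nat \<Rightarrow> real) \<Rightarrow> (nat \<Rightarrow> nat) \<Rightarrow> real" where
  "PP act act' th k x v = (\<Prod>n\<in>{k+1..L}. wgt l th n (v n) (v (n - 1)) * act' (n - 1) (net l th act (n - 1) x (v (n - 1))))"

definition pathW where
  "pathW act act' th k i j x v = 2 * cW act th k j x * (indicator {i} (v k) :: real)
     * (net l th act L x (v L) - f x (v L)) * PP act act' th k x v"

definition pathB where
  "pathB act act' th k i x v = 2 * (indicator {i} (v k) :: real)
     * (net l th act L x (v L) - f x (v L)) * PP act act' th k x v"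

definition Fg where
  "Fg act act' th x h = (\<Sum>u = 1..l L. 2 * (net l th act L x u - f x u) * dnet l th act act' L x u h)"

lemma Fr'_Fg: "Fr' r v x h = Fg (actR R r) (actD r) (coords idx v) x (coords idx h)"
  unfolding Fr'_def Fg_def ..

lemma Fg_weight:
  assumes H: "\<forall>q\<in>{1..dsum l L}. h q = (if q = p then 1 else 0)"
    and kL: "k \<in> {1..L}" and i: "i \<in> {1..l k}" and j0: "j0 \<in> {1..l (k - 1)}"
    and p: "p = (i - 1) * l (k - 1) + j0 + dsum l (k - 1)"
  shows "Fg act act' th x h = (\<Sum>v\<in>PiE {k..L} (\<lambda>w. {1..l w}). pathW act act' th k i j0 x v)"
  unfolding Fg_def pathW_def cW_def PP_def by (rule dF_weight[OF H kL i j0 p])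

lemma Fg_bias:
  assumes H: "\<forall>q\<in>{1..dsum l L}. h q = (if q = p then 1 else 0)"
    and kL: "k \<in> {1..L}" and i: "i \<in> {1..l k}"
    and p: "p = l k * l (k - 1) + i + dsum l (k - 1)"
  shows "Fg act act' th x h = (\<Sum>v\<in>PiE {k..L} (\<lambda>w. {1..l w}). pathB act act' th k i x v)"
  unfolding Fg_def pathB_def PP_def by (rule dF_bias[OF H kL i p])

lemma idx_inj: "inj_on idx {1..dsum l L}"
  using idx_bij bij_betw_imp_inj_on by blast

lemma unit_coords:
  assumes p: "p \<in> {1..dsum l L}"
  shows "\<forall>q\<in>{1..dsum l L}. coords idx (axis (idx p) 1) q = (if q = p then 1 else 0)"
proof
  fix q assume q: "q \<in> {1..dsum l L}"
  have "coords idx (axis (idx p) 1) q = (if idx q = idx p then 1 else 0)"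
    unfolding coords_def axis_def by simp
  moreover have "(idx q = idx p) = (q = p)" by (rule inj_on_eq_iff[OF idx_inj q p])
  ultimately show "coords idx (axis (idx p) 1) q = (if q = p then 1 else 0)" by simp
qed

lemma windex_in:
  assumes "k \<in> {1..L}" "i \<in> {1..l k}" "j \<in> {1..l (k - 1)}"
  shows "(i - 1) * l (k - 1) + j + dsum l (k - 1) \<in> {1..dsum l L}"
proof -
  have k1: "1 \<le> k" and kL: "k \<le> L" using assms(1) by simp_all
  have r: "dsum l (k - 1) < (i - 1) * l (k - 1) + j + dsum l (k - 1)"
    "(i - 1) * l (k - 1) + j + dsum l (k - 1) \<le> dsum l k"
    using windex_layer[OF k1 assms(2) assms(3)] by simp_all
  have "dsum l k \<le> dsum l L" by (rule dsum_mono[OF kL])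
  then show ?thesis using r by (intro atLeastAtMost_iff[THEN iffD2] conjI) linarith+
qed

lemma bindex_in:
  assumes "k \<in> {1..L}" "i \<in> {1..l k}"
  shows "l k * l (k - 1) + i + dsum l (k - 1) \<in> {1..dsum l L}"
proof -
  have k1: "1 \<le> k" and kL: "k \<le> L" using assms(1) by simp_all
  have r: "dsum l (k - 1) < l k * l (k - 1) + i + dsum l (k - 1)"
    "l k * l (k - 1) + i + dsum l (k - 1) \<le> dsum l k"
    using bindex_layer[where l=l, OF k1 assms(2)] by simp_all
  have "dsum l k \<le> dsum l L" by (rule dsum_mono[OF kL])
  then show ?thesis using r by (intro atLeastAtMost_iff[THEN iffD2] conjI) linarith+
qed

end

context NN
begin

lemma actR_app: "actR R r m y = R (r powr (1 / real m)) y" unfolding actR_def ..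
lemma actD_app: "actD r m y = deriv (R (r powr (1 / real m))) y" unfolding actD_def ..

lemma PP_meas:
  assumes am: "\<And>k. act k \<in> borel_measurable borel" and am': "\<And>k. act' k \<in> borel_measurable borel"
  shows "(\<lambda>x. PP act act' th k x v) \<in> borel_measurable \<mu>"
  unfolding PP_def
proof (rule borel_measurable_prod)
  fix n
  have "(\<lambda>x. act' (n - 1) (net l th act (n - 1) x (v (n - 1)))) \<in> borel_measurable \<mu>"
    by (rule measurable_compose[OF net_meas[OF xm am] am'])
  then show "(\<lambda>x. wgt l th n (v n) (v (n - 1)) * act' (n - 1) (net l th act (n - 1) x (v (n - 1)))) \<in> borel_measurable \<mu>"
    by (rule borel_measurable_times[OF borel_measurable_const])
qed

lemma cW_meas:
  assumes am: "\<And>k. act k \<in> borel_measurable borel"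
  shows "(\<lambda>x. cW act th k j x) \<in> borel_measurable \<mu>"
proof -
  have "(\<lambda>x. act (max (k - 1) 1) (net l th act (max (k - 1) 1) x j)) \<in> borel_measurable \<mu>"
    by (rule measurable_compose[OF net_meas[OF xm am] am])
  then show ?thesis unfolding cW_def
    by (intro borel_measurable_add borel_measurable_times borel_measurable_const xm)
qed

lemma PP_bound:
  assumes ab': "\<And>k y. \<bar>act' k y\<bar> \<le> Cb"
  shows "\<bar>PP act act' (coords idx \<theta>) k x v\<bar> \<le> (norm \<theta> * Cb) ^ card {k+1..L}"
  unfolding PP_def
proof (rule prod_bound)
  fix n
  have "\<bar>wgt l (coords idx \<theta>) n (v n) (v (n - 1))\<bar> \<le> norm \<theta>" unfolding wgt_def by (rule coords_bound)
  then show "\<bar>wgt l (coords idx \<theta>) n (v n) (v (n - 1)) * act' (n - 1) (net l (coords idx \<theta>) act (n - 1) x (v (n - 1)))\<bar>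
      \<le> norm \<theta> * Cb"
    unfolding abs_mult using ab' by (intro mult_mono) auto
qed

lemma cW_bound:
  assumes ab: "\<And>k y. \<bar>act k y\<bar> \<le> \<bar>y\<bar>" and kL: "k \<in> {1..L}" and j: "j \<in> {1..l (k - 1)}"
  obtains Kc where "Kc \<ge> 0" "\<And>x. x \<in> space \<mu> \<Longrightarrow> \<bar>cW act (coords idx \<theta>) k j x\<bar> \<le> Kc"
proof -
  obtain K where K: "K \<ge> 0" "\<And>x i. x \<in> space \<mu> \<Longrightarrow> \<bar>net l (coords idx \<theta>) act (max (k - 1) 1) x i\<bar> \<le> K"
    by (rule net_bnd[where act=act and v=\<theta> and k="max (k - 1) 1", OF ab]) blast
  show ?thesis
  proof (rule that[of "K + abv"])
    show "0 \<le> K + abv" using K(1) abv_nonneg by simp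
    fix x assume x: "x \<in> space \<mu>"
    have a: "\<bar>act (max (k - 1) 1) (net l (coords idx \<theta>) act (max (k - 1) 1) x j) * (indicator {1<..L} k :: real)\<bar> \<le> K"
    proof -
      have n: "\<bar>net l (coords idx \<theta>) act (max (k - 1) 1) x j\<bar> \<le> K" using K(2)[OF x] .
      have "\<bar>act (max (k - 1) 1) (net l (coords idx \<theta>) act (max (k - 1) 1) x j)\<bar> \<le> K"
        using ab[of "max (k - 1) 1" "net l (coords idx \<theta>) act (max (k - 1) 1) x j"] n by linarith
      then show ?thesis using K(1) by (simp add: indicator_def)
    qed
    have b: "\<bar>x j * (indicator {1} k :: real)\<bar> \<le> abv"
    proof (cases "k = 1")
      case True
      then have "j \<in> {1..l 0}" using j by simp
      then show ?thesis using x_bound[OF x] True by simp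
    next
      case False then show ?thesis using abv_nonneg by simp
    qed
    have "\<bar>cW act (coords idx \<theta>) k j x\<bar> \<le> \<bar>act (max (k - 1) 1) (net l (coords idx \<theta>) act (max (k - 1) 1) x j) * (indicator {1<..L} k :: real)\<bar>
      + \<bar>x j * (indicator {1} k :: real)\<bar>"
      unfolding cW_def by (rule abs_triangle_ineq)
    then show "\<bar>cW act (coords idx \<theta>) k j x\<bar> \<le> K + abv" using a b by linarith
  qed
qed

lemma int_bdd_mult:
  fixes g \<phi> :: "(nat \<Rightarrow> real) \<Rightarrow> real" and K :: real
  assumes gi: "integrable \<mu> g" and pm: "\<phi> \<in> borel_measurable \<mu>"
    and b: "\<And>x. x \<in> space \<mu> \<Longrightarrow> \<bar>\<phi> x\<bar> \<le> K"
  shows "integrable \<mu> (\<lambda>x. \<phi> x * g x)"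
proof (rule Bochner_Integration.integrable_bound[of _ "\<lambda>x. K * g x"])
  show "integrable \<mu> (\<lambda>x. K * g x)" using gi by simp
  show "(\<lambda>x. \<phi> x * g x) \<in> borel_measurable \<mu>" using pm gi by measurable
  show "AE x in \<mu>. norm (\<phi> x * g x) \<le> norm (K * g x)"
  proof (rule AE_I2)
    fix x assume x: "x \<in> space \<mu>"
    have "\<bar>\<phi> x\<bar> * \<bar>g x\<bar> \<le> \<bar>K\<bar> * \<bar>g x\<bar>"
      using b[OF x] by (intro mult_right_mono) auto
    then show "norm (\<phi> x * g x) \<le> norm (K * g x)" by (simp add: abs_mult)
  qed
qed

lemma int_path:
  assumes am: "\<And>k. act k \<in> borel_measurable borel" and am': "\<And>k. act' k \<in> borel_measurable borel"
    and ab: "\<And>k y. \<bar>act k y\<bar> \<le> \<bar>y\<bar>" and ab': "\<And>k y. \<bar>act' k y\<bar> \<le> Cb"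
    and SQ: "integrable \<mu> (\<lambda>x. \<Sum>u = 1..l L. (net l (coords idx \<theta>) act L x u - f x u)\<^sup>2)"
    and kL: "k \<in> {1..L}" and j: "j \<in> {1..l (k - 1)}" and v: "v \<in> PiE {k..L} (\<lambda>w. {1..l w})"
  shows "integrable \<mu> (\<lambda>x. pathW act act' (coords idx \<theta>) k i j x v)"
    "integrable \<mu> (\<lambda>x. pathB act act' (coords idx \<theta>) k i x v)"
proof -
  let ?th = "coords idx \<theta>"
  have vL: "v L \<in> {1..l L}" using v kL by (auto simp: PiE_def Pi_def)
  have d: "integrable \<mu> (\<lambda>x. net l ?th act L x (v L) - f x (v L))"
    by (rule diff_int[OF SQ net_meas[OF xm am] vL])
  obtain Kc where Kc: "Kc \<ge> 0" "\<And>x. x \<in> space \<mu> \<Longrightarrow> \<bar>cW act ?th k j x\<bar> \<le> Kc"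
    by (rule cW_bound[where act=act and \<theta>=\<theta>, OF ab kL j]) blast
  let ?KP = "(norm \<theta> * Cb) ^ card {k+1..L}"
  have ind: "\<bar>indicator {i} (v k) :: real\<bar> \<le> 1" by (simp add: indicator_def)
  have "integrable \<mu> (\<lambda>x. (2 * cW act ?th k j x * (indicator {i} (v k) :: real) * PP act act' ?th k x v)
      * (net l ?th act L x (v L) - f x (v L)))"
  proof (rule int_bdd_mult[OF d])
    show "(\<lambda>x. 2 * cW act ?th k j x * (indicator {i} (v k) :: real) * PP act act' ?th k x v) \<in> borel_measurable \<mu>"
      using cW_meas[OF am] PP_meas[OF am am'] by measurable
    fix x assume x: "x \<in> space \<mu>"
    show "\<bar>2 * cW act ?th k j x * (indicator {i} (v k) :: real) * PP act act' ?th k x v\<bar> \<le> 2 * Kc * 1 * ?KP"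
      unfolding abs_mult using Kc(2)[OF x] ind PP_bound[OF ab'] Kc(1)
      by (intro mult_mono) auto
  qed
  then show "integrable \<mu> (\<lambda>x. pathW act act' ?th k i j x v)"
    unfolding pathW_def by (simp add: ac_simps)
  have "integrable \<mu> (\<lambda>x. (2 * (indicator {i} (v k) :: real) * PP act act' ?th k x v)
      * (net l ?th act L x (v L) - f x (v L)))"
  proof (rule int_bdd_mult[OF d])
    show "(\<lambda>x. 2 * (indicator {i} (v k) :: real) * PP act act' ?th k x v) \<in> borel_measurable \<mu>"
      using PP_meas[OF am am'] by measurable
    fix x assume x: "x \<in> space \<mu>"
    show "\<bar>2 * (indicator {i} (v k) :: real) * PP act act' ?th k x v\<bar> \<le> 2 * 1 * ?KP"
      unfolding abs_mult using ind PP_bound[OF ab']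
      by (intro mult_mono) auto
  qed
  then show "integrable \<mu> (\<lambda>x. pathB act act' ?th k i x v)"
    unfolding pathB_def by (simp add: ac_simps)
qed

end

context NN
begin

lemma DFr:
  assumes r: "1 \<le> r"
  obtains D :: "(real^'d) \<Rightarrow> ((real^'d) \<Rightarrow>\<^sub>L real)" where
    "\<And>v. ((\<lambda>u. loss l L \<mu> f (actR R r) (coords idx u)) has_derivative blinfun_apply (D v)) (at v)"
    "continuous_on UNIV D" "\<And>v h. D v h = (\<integral>x. Fg (actR R r) (actD r) (coords idx v) x (coords idx h) \<partial>\<mu>)"
  using loss_C1[OF r] unfolding Fr'_Fg by blast

lemma actR_props:
  assumes r: "1 \<le> r"
  shows "\<And>k. actR R r k \<in> borel_measurable borel" "\<And>k. actD r k \<in> borel_measurable borel"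
    "\<And>k y. \<bar>actR R r k y\<bar> \<le> \<bar>y\<bar>" "\<And>k y. \<bar>actD r k y\<bar> \<le> Cb"
  using actR_meas[OF r] actD_meas[OF r] actR_facts(4)[OF r] actR_facts(5)[OF r] Cb(3) order_trans
  by blast+

lemma deriv_weight:
  assumes r: "1 \<le> r" and kL: "k \<in> {1..L}" and i: "i \<in> {1..l k}" and j: "j \<in> {1..l (k - 1)}"
  shows "((\<lambda>t. loss l L \<mu> f (actR R r)
                 (coords idx (\<theta> + t *\<^sub>R axis (idx ((i - 1) * l (k - 1) + j + dsum l (k - 1))) 1)))
          has_real_derivative
          (\<Sum>v\<in>PiE {k..L} (\<lambda>w. {1..l w}).
             \<integral>x. 2 * (R (r powr (1 / real (max (k - 1) 1)))
                         (net l (coords idx \<theta>) (actR R r) (max (k - 1) 1) x j)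
                       * (indicator {1<..L} k :: real)
                       + x j * (indicator {1} k :: real))
                  * (indicator {i} (v k) :: real)
                  * (net l (coords idx \<theta>) (actR R r) L x (v L) - f x (v L))
                  * (\<Prod>n\<in>{k+1..L}. wgt l (coords idx \<theta>) n (v n) (v (n - 1))
                       * deriv (R (r powr (1 / real (n - 1))))
                           (net l (coords idx \<theta>) (actR R r) (n - 1) x (v (n - 1)))) \<partial>\<mu>))
          (at 0)"
proof -
  let ?p = "(i - 1) * l (k - 1) + j + dsum l (k - 1)"
  let ?e = "axis (idx ?p) 1 :: real^'d"
  obtain D where D: "\<And>v. ((\<lambda>u. loss l L \<mu> f (actR R r) (coords idx u)) has_derivative blinfun_apply (D v)) (at v)"
    "\<And>v h. D v h = (\<integral>x. Fg (actR R r) (actD r) (coords idx v) x (coords idx h) \<partial>\<mu>)"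
    by (rule DFr[OF r]) blast
  have d1: "((\<lambda>t. loss l L \<mu> f (actR R r) (coords idx (\<theta> + t *\<^sub>R ?e))) has_real_derivative D \<theta> ?e) (at 0)"
    by (rule dir_deriv[OF D(1)])
  have H: "\<forall>q\<in>{1..dsum l L}. coords idx ?e q = (if q = ?p then 1 else 0)"
    by (rule unit_coords[OF windex_in[OF kL i j]])
  have "D \<theta> ?e = (\<integral>x. (\<Sum>v\<in>PiE {k..L} (\<lambda>w. {1..l w}). pathW (actR R r) (actD r) (coords idx \<theta>) k i j x v) \<partial>\<mu>)"
    unfolding D(2) Fg_weight[OF H kL i j refl] ..
  also have "\<dots> = (\<Sum>v\<in>PiE {k..L} (\<lambda>w. {1..l w}). \<integral>x. pathW (actR R r) (actD r) (coords idx \<theta>) k i j x v \<partial>\<mu>)"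
    by (rule Bochner_Integration.integral_sum)
       (rule int_path(1)[OF actR_props[OF r] int_r[rule_format, OF r] kL j], assumption)
  finally have "D \<theta> ?e = (\<Sum>v\<in>PiE {k..L} (\<lambda>w. {1..l w}). \<integral>x. pathW (actR R r) (actD r) (coords idx \<theta>) k i j x v \<partial>\<mu>)" .
  with d1 show ?thesis
    unfolding pathW_def cW_def PP_def actR_app actD_app by simp
qed

lemma deriv_bias:
  assumes r: "1 \<le> r" and kL: "k \<in> {1..L}" and i: "i \<in> {1..l k}"
  shows "((\<lambda>t. loss l L \<mu> f (actR R r)
                 (coords idx (\<theta> + t *\<^sub>R axis (idx (l k * l (k - 1) + i + dsum l (k - 1))) 1)))
          has_real_derivative
          (\<Sum>v\<in>PiE {k..L} (\<lambda>w. {1..l w}).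
             \<integral>x. 2 * (indicator {i} (v k) :: real)
                  * (net l (coords idx \<theta>) (actR R r) L x (v L) - f x (v L))
                  * (\<Prod>n\<in>{k+1..L}. wgt l (coords idx \<theta>) n (v n) (v (n - 1))
                       * deriv (R (r powr (1 / real (n - 1))))
                           (net l (coords idx \<theta>) (actR R r) (n - 1) x (v (n - 1)))) \<partial>\<mu>))
          (at 0)"
proof -
  let ?p = "l k * l (k - 1) + i + dsum l (k - 1)"
  let ?e = "axis (idx ?p) 1 :: real^'d"
  obtain D where D: "\<And>v. ((\<lambda>u. loss l L \<mu> f (actR R r) (coords idx u)) has_derivative blinfun_apply (D v)) (at v)"
    "\<And>v h. D v h = (\<integral>x. Fg (actR R r) (actD r) (coords idx v) x (coords idx h) \<partial>\<mu>)"
    by (rule DFr[OF r]) blast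
  have d1: "((\<lambda>t. loss l L \<mu> f (actR R r) (coords idx (\<theta> + t *\<^sub>R ?e))) has_real_derivative D \<theta> ?e) (at 0)"
    by (rule dir_deriv[OF D(1)])
  have H: "\<forall>q\<in>{1..dsum l L}. coords idx ?e q = (if q = ?p then 1 else 0)"
    by (rule unit_coords[OF bindex_in[OF kL i]])
  have j1: "1 \<in> {1..l (k - 1)}" using l_pos by auto
  have "D \<theta> ?e = (\<integral>x. (\<Sum>v\<in>PiE {k..L} (\<lambda>w. {1..l w}). pathB (actR R r) (actD r) (coords idx \<theta>) k i x v) \<partial>\<mu>)"
    unfolding D(2) Fg_bias[OF H kL i refl] ..
  also have "\<dots> = (\<Sum>v\<in>PiE {k..L} (\<lambda>w. {1..l w}). \<integral>x. pathB (actR R r) (actD r) (coords idx \<theta>) k i x v \<partial>\<mu>)"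
    by (rule Bochner_Integration.integral_sum)
       (rule int_path(2)[OF actR_props[OF r] int_r[rule_format, OF r] kL j1], assumption)
  finally have "D \<theta> ?e = (\<Sum>v\<in>PiE {k..L} (\<lambda>w. {1..l w}). \<integral>x. pathB (actR R r) (actD r) (coords idx \<theta>) k i x v \<partial>\<mu>)" .
  with d1 show ?thesis
    unfolding pathB_def PP_def actD_app by simp
qed

end

lemma root_ge:
  fixes c r :: real
  assumes c: "0 < c" and k: "1 \<le> k" and r: "max 1 (c ^ k) \<le> r"
  shows "c \<le> r powr (1 / real k)"
proof -
  have "c = (c ^ k) powr (1 / real k)"
    using c k by (simp add: powr_realpow[symmetric] powr_powr)
  also have "\<dots> \<le> r powr (1 / real k)"
    using r c by (intro powr_mono2) auto
  finally show ?thesis .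
qed

context NN
begin

lemma ev_ge1: "\<forall>\<^sub>F r in at_top. (1::real) \<le> r"
  by (rule eventually_ge_at_top)

lemma ev_act:
  assumes k: "1 \<le> k"
  shows "\<forall>\<^sub>F r in at_top. actR R r k y = actInf k y"
proof (cases "y \<le> 0")
  case True
  show ?thesis using ev_ge1
  proof eventually_elim
    case (elim r)
    have s: "1 \<le> r powr (1 / real k)" by (rule s_ge1[OF elim])
    have "y \<le> A / r powr (1 / real k)" using True AB s by (smt (verit) divide_nonneg_pos)
    then have "R (r powr (1 / real k)) y = 0" using R_zero s by blast
    then show ?case using True unfolding actR_def actInf_def relu_def by simp
  qed
next
  case False
  then have y: "0 < y" by simp
  have c: "0 < B / y" using y AB by simp
  have "\<forall>\<^sub>F r in at_top. max 1 ((B / y) ^ k) \<le> r" by (rule eventually_ge_at_top)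
  then show ?thesis
  proof eventually_elim
    case (elim r)
    have r1: "1 \<le> r" using elim by simp
    have s: "1 \<le> r powr (1 / real k)" by (rule s_ge1[OF r1])
    have "B / y \<le> r powr (1 / real k)" by (rule root_ge[OF c k elim])
    then have "B / r powr (1 / real k) \<le> y" using y s AB
      by (simp add: divide_le_eq field_simps)
    then have "R (r powr (1 / real k)) y = y" using R_id s by blast
    then show ?case using y unfolding actR_def actInf_def relu_def by simp
  qed
qed

lemma deriv_local:
  fixes g h :: "real \<Rightarrow> real"
  assumes "open S" "y \<in> S" "\<And>z. z \<in> S \<Longrightarrow> g z = h z" "(h has_real_derivative d) (at y)"
  shows "deriv g y = d"
proof -
  have "(g has_real_derivative d) (at y)"
    by (rule has_field_derivative_transform_within_open[OF assms(4) assms(1) assms(2)]) (use assms(3) in simp)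
  then show ?thesis by (rule DERIV_imp_deriv)
qed

lemma ev_actD:
  assumes k: "1 \<le> k"
  shows "\<forall>\<^sub>F r in at_top. actD r k y = actIndic k y"
proof (cases "y \<le> 0")
  case True
  show ?thesis using ev_ge1
  proof eventually_elim
    case (elim r)
    let ?s = "r powr (1 / real k)"
    have s: "1 \<le> ?s" by (rule s_ge1[OF elim])
    have pos: "0 < A / ?s" using AB s by (intro divide_pos_pos) auto
    have "deriv (R ?s) y = 0"
    proof (rule deriv_local[where S="{..<A / ?s}" and h="\<lambda>_. 0"])
      show "y \<in> {..<A / ?s}" using True pos by simp
      show "R ?s z = 0" if "z \<in> {..<A / ?s}" for z using R_zero s that by auto
    qed auto
    then show ?case using True unfolding actD_def actIndic_def by simp
  qed
next
  case False
  then have y: "0 < y" by simp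
  have c: "0 < 2 * B / y" using y AB by simp
  have "\<forall>\<^sub>F r in at_top. max 1 ((2 * B / y) ^ k) \<le> r" by (rule eventually_ge_at_top)
  then show ?thesis
  proof eventually_elim
    case (elim r)
    let ?s = "r powr (1 / real k)"
    have r1: "1 \<le> r" using elim by simp
    have s: "1 \<le> ?s" by (rule s_ge1[OF r1])
    have "2 * B / y \<le> ?s" by (rule root_ge[OF c k elim])
    then have "2 * B \<le> ?s * y" using y by (simp add: divide_le_eq)
    then have lt: "B / ?s < y" using y s AB by (simp add: divide_less_eq) (smt (verit) mult.commute)
    have "deriv (R ?s) y = 1"
    proof (rule deriv_local[where S="{B / ?s<..}" and h="\<lambda>z. z"])
      show "y \<in> {B / ?s<..}" using lt by simp
      show "R ?s z = z" if "z \<in> {B / ?s<..}" for z using R_id s that by auto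
    qed (auto intro!: derivative_eq_intros)
    then show ?case using y unfolding actD_def actIndic_def by simp
  qed
qed

end

context NN
begin

lemma ev_net: "\<forall>\<^sub>F r in at_top. net l th (actR R r) k x i = net l th actInf k x i"
proof (induction k arbitrary: i rule: less_induct)
  case (less k)
  show ?case
  proof (cases k)
    case 0 then show ?thesis by simp
  next
    case (Suc k1)
    show ?thesis
    proof (cases k1)
      case 0 then show ?thesis using Suc by simp
    next
      case (Suc k2)
      have "\<forall>\<^sub>F r in at_top. \<forall>j\<in>{1..l (Suc k2)}. net l th (actR R r) (Suc k2) x j = net l th actInf (Suc k2) x j
          \<and> actR R r (Suc k2) (net l th actInf (Suc k2) x j) = actInf (Suc k2) (net l th actInf (Suc k2) x j)"
        using less[of "Suc k2"] \<open>k = Suc k1\<close> Suc ev_act[of "Suc k2"]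
        by (intro eventually_ball_finite eventually_conj ballI) auto
      then show ?thesis
      proof eventually_elim
        case (elim r)
        then show ?case using \<open>k = Suc k1\<close> Suc by (auto intro!: sum.cong)
      qed
    qed
  qed
qed

lemma ev_dnet: "\<forall>\<^sub>F r in at_top. dnet l th (actR R r) (actD r) k x i h = dnet l th actInf actIndic k x i h"
proof (induction k arbitrary: i rule: less_induct)
  case (less k)
  show ?case
  proof (cases k)
    case 0 then show ?thesis by simp
  next
    case (Suc k1)
    show ?thesis
    proof (cases k1)
      case 0 then show ?thesis using Suc by simp
    next
      case (Suc k2)
      have "\<forall>\<^sub>F r in at_top. \<forall>j\<in>{1..l (Suc k2)}. net l th (actR R r) (Suc k2) x j = net l th actInf (Suc k2) x j
          \<and> actR R r (Suc k2) (net l th actInf (Suc k2) x j) = actInf (Suc k2) (net l th actInf (Suc k2) x j)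
          \<and> actD r (Suc k2) (net l th actInf (Suc k2) x j) = actIndic (Suc k2) (net l th actInf (Suc k2) x j)
          \<and> dnet l th (actR R r) (actD r) (Suc k2) x j h = dnet l th actInf actIndic (Suc k2) x j h"
        using less[of "Suc k2"] \<open>k = Suc k1\<close> Suc ev_act[of "Suc k2"] ev_actD[of "Suc k2"] ev_net
        by (intro eventually_ball_finite eventually_conj ballI) auto
      then show ?thesis
      proof eventually_elim
        case (elim r)
        then show ?case using \<open>k = Suc k1\<close> Suc by (auto intro!: sum.cong)
      qed
    qed
  qed
qed

lemma ev_Fg: "\<forall>\<^sub>F r in at_top. Fg (actR R r) (actD r) th x h = Fg actInf actIndic th x h"
proof -
  have "\<forall>\<^sub>F r in at_top. \<forall>u\<in>{1..l L}. net l th (actR R r) L x u = net l th actInf L x u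
     \<and> dnet l th (actR R r) (actD r) L x u h = dnet l th actInf actIndic L x u h"
    using ev_net ev_dnet by (intro eventually_ball_finite eventually_conj ballI) auto
  then show ?thesis
  proof eventually_elim
    case (elim r)
    then show ?case unfolding Fg_def by (auto intro!: sum.cong)
  qed
qed

lemma ev_sq: "\<forall>\<^sub>F r in at_top. (\<Sum>u = 1..l L. (net l th (actR R r) L x u - f x u)\<^sup>2)
    = (\<Sum>u = 1..l L. (net l th actInf L x u - f x u)\<^sup>2)"
proof -
  have "\<forall>\<^sub>F r in at_top. \<forall>u\<in>{1..l L}. net l th (actR R r) L x u = net l th actInf L x u"
    using ev_net by (intro eventually_ball_finite ballI) auto
  then show ?thesis
  proof eventually_elim
    case (elim r)
    then show ?case by (auto intro!: sum.cong)
  qed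
qed

lemma actIndic_meas: "actIndic k \<in> borel_measurable borel"
proof -
  have "actIndic k = indicator {0<..}" unfolding actIndic_def by (auto simp: indicator_def)
  then show ?thesis by simp
qed

lemma actIndic_bound: "\<bar>actIndic k y\<bar> \<le> Cb"
  using Cb(2) unfolding actIndic_def by auto

lemma Fg_meas:
  assumes am: "\<And>k. act k \<in> borel_measurable borel" and am': "\<And>k. act' k \<in> borel_measurable borel"
  shows "(\<lambda>x. Fg act act' th x h) \<in> borel_measurable \<mu>"
proof -
  have "(\<lambda>x. net l th act L x u) \<in> borel_measurable \<mu>" for u by (rule net_meas[OF xm am])
  moreover have "(\<lambda>x. dnet l th act act' L x u h) \<in> borel_measurable \<mu>" for u
    by (rule dnet_meas[OF xm am am'])
  moreover have "u \<in> {1..l L} \<Longrightarrow> (\<lambda>x. f x u) \<in> borel_measurable \<mu>" for u using f_meas by blast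
  ultimately show ?thesis unfolding Fg_def
    by (intro borel_measurable_sum borel_measurable_times borel_measurable_diff borel_measurable_const) auto
qed

end

context NN
begin

lemma Fg_bound:
  obtains g where "integrable \<mu> g" "\<And>r x e. 1 \<le> r \<Longrightarrow> x \<in> space \<mu> \<Longrightarrow>
     \<bar>Fg (actR R r) (actD r) (coords idx \<theta>) x (coords idx e)\<bar> \<le> g x * norm e"
proof -
  define M where "M = norm \<theta>"
  have M: "0 \<le> M" unfolding M_def by simp
  obtain Kn where Kn: "Kn \<ge> 0" "\<And>act v x i. (\<And>k y. \<bar>act k y\<bar> \<le> \<bar>y\<bar>) \<Longrightarrow> norm v \<le> M \<Longrightarrow> x \<in> space \<mu> \<Longrightarrow>
     \<bar>net l (coords idx v) act L x i\<bar> \<le> Kn"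
    by (rule net_bnd2[OF M, where k=L]) blast
  obtain Kd where Kd: "Kd \<ge> 0" "\<And>act act' v x i h. (\<And>k y. \<bar>act k y\<bar> \<le> \<bar>y\<bar>) \<Longrightarrow> (\<And>k y. \<bar>act' k y\<bar> \<le> Cd) \<Longrightarrow>
     norm v \<le> M \<Longrightarrow> x \<in> space \<mu> \<Longrightarrow>
     \<bar>dnet l (coords idx v) act act' L x i (coords idx h)\<bar> \<le> Kd * norm h"
    by (rule dnet_bnd2[OF M, where k=L]) blast
  define g where "g x = (\<Sum>u = 1..l L. 2 * (Kn + \<bar>f x u\<bar>) * Kd)" for x
  have gi: "integrable \<mu> g"
    unfolding g_def using f_int finite_measure.integrable_const[OF fin]
    by (intro Bochner_Integration.integrable_sum Bochner_Integration.integrable_mult_left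
        Bochner_Integration.integrable_mult_right Bochner_Integration.integrable_add integrable_abs) auto
  have "\<bar>Fg (actR R r) (actD r) (coords idx \<theta>) x (coords idx e)\<bar> \<le> g x * norm e"
    if r: "1 \<le> r" and x: "x \<in> space \<mu>" for r x e
  proof -
    have nv: "norm \<theta> \<le> M" unfolding M_def by simp
    have "\<bar>Fg (actR R r) (actD r) (coords idx \<theta>) x (coords idx e)\<bar> \<le> (\<Sum>u = 1..l L. \<bar>2 * (net l (coords idx \<theta>) (actR R r) L x u - f x u)
       * dnet l (coords idx \<theta>) (actR R r) (actD r) L x u (coords idx e)\<bar>)"
      unfolding Fg_def by (rule sum_abs)
    also have "\<dots> \<le> (\<Sum>u = 1..l L. 2 * (Kn + \<bar>f x u\<bar>) * (Kd * norm e))"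
    proof (rule sum_mono)
      fix u
      have n: "\<bar>net l (coords idx \<theta>) (actR R r) L x u\<bar> \<le> Kn"
        using Kn(2)[OF actR_facts(4)[OF r] nv x] .
      have d: "\<bar>dnet l (coords idx \<theta>) (actR R r) (actD r) L x u (coords idx e)\<bar> \<le> Kd * norm e"
        using Kd(2)[OF actR_facts(4)[OF r] actR_facts(5)[OF r] nv x] .
      have "\<bar>net l (coords idx \<theta>) (actR R r) L x u - f x u\<bar> \<le> Kn + \<bar>f x u\<bar>"
        using n by linarith
      then show "\<bar>2 * (net l (coords idx \<theta>) (actR R r) L x u - f x u)
         * dnet l (coords idx \<theta>) (actR R r) (actD r) L x u (coords idx e)\<bar> \<le> 2 * (Kn + \<bar>f x u\<bar>) * (Kd * norm e)"
        unfolding abs_mult using d by (intro mult_mono) auto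
    qed
    also have "\<dots> = g x * norm e" unfolding g_def sum_distrib_right by (simp add: algebra_simps)
    finally show ?thesis .
  qed
  then show ?thesis using gi that by blast
qed

lemma lim_Fg:
  "((\<lambda>r. \<integral>x. Fg (actR R r) (actD r) (coords idx \<theta>) x (coords idx e) \<partial>\<mu>)
     \<longlongrightarrow> (\<integral>x. Fg actInf actIndic (coords idx \<theta>) x (coords idx e) \<partial>\<mu>)) at_top"
proof -
  obtain g where g: "integrable \<mu> g" "\<And>r x e. 1 \<le> r \<Longrightarrow> x \<in> space \<mu> \<Longrightarrow>
     \<bar>Fg (actR R r) (actD r) (coords idx \<theta>) x (coords idx e)\<bar> \<le> g x * norm e"
    by (rule Fg_bound) blast
  define s where "s t x = Fg (actR R (max t 1)) (actD (max t 1)) (coords idx \<theta>) x (coords idx e)" for t x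
  have "((\<lambda>t. integral\<^sup>L \<mu> (s t)) \<longlongrightarrow> (\<integral>x. Fg actInf actIndic (coords idx \<theta>) x (coords idx e) \<partial>\<mu>)) at_top"
  proof (rule integral_dominated_convergence_at_top[where w="\<lambda>x. g x * norm e"])
    show "(\<lambda>x. Fg actInf actIndic (coords idx \<theta>) x (coords idx e)) \<in> borel_measurable \<mu>"
      by (rule Fg_meas[OF actInf_meas actIndic_meas])
    show "s t \<in> borel_measurable \<mu>" for t
      unfolding s_def by (rule Fg_meas[OF actR_props(1,2)]) auto
    show "integrable \<mu> (\<lambda>x. g x * norm e)" using g(1) by simp
    show "AE x in \<mu>. ((\<lambda>i. s i x) \<longlongrightarrow> Fg actInf actIndic (coords idx \<theta>) x (coords idx e)) at_top"
    proof (rule AE_I2)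
      fix x
      have "\<forall>\<^sub>F t in at_top. s t x = Fg actInf actIndic (coords idx \<theta>) x (coords idx e)"
        using ev_ge1 ev_Fg[of "coords idx \<theta>" x "coords idx e"]
      proof eventually_elim
        case (elim t) then show ?case unfolding s_def by simp
      qed
      then show "((\<lambda>i. s i x) \<longlongrightarrow> Fg actInf actIndic (coords idx \<theta>) x (coords idx e)) at_top"
        by (rule tendsto_eventually)
    qed
    show "\<forall>\<^sub>F i in at_top. AE x in \<mu>. norm (s i x) \<le> g x * norm e"
      by (intro always_eventually allI AE_I2) (auto simp: s_def intro!: g(2))
  qed
  moreover have "\<forall>\<^sub>F t in at_top. integral\<^sup>L \<mu> (s t) = (\<integral>x. Fg (actR R t) (actD t) (coords idx \<theta>) x (coords idx e) \<partial>\<mu>)"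
    using ev_ge1 by eventually_elim (rule Bochner_Integration.integral_cong, simp_all add: s_def max_absorb1)
  ultimately show ?thesis by (rule Lim_transform_eventually)
qed

lemma sq2: "(p + q)\<^sup>2 \<le> 2 * p\<^sup>2 + 2 * (q::real)\<^sup>2"
proof -
  have "0 \<le> (p - q)\<^sup>2" by simp
  then show ?thesis by (simp add: power2_sum power2_diff)
qed

lemma lim_loss:
  "((\<lambda>r. loss l L \<mu> f (actR R r) (coords idx \<theta>)) \<longlongrightarrow> loss l L \<mu> f actInf (coords idx \<theta>)) at_top"
proof -
  define M where "M = norm \<theta>"
  have M: "0 \<le> M" unfolding M_def by simp
  obtain Kn where Kn: "Kn \<ge> 0" "\<And>act v x i. (\<And>k y. \<bar>act k y\<bar> \<le> \<bar>y\<bar>) \<Longrightarrow> norm v \<le> M \<Longrightarrow> x \<in> space \<mu> \<Longrightarrow>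
     \<bar>net l (coords idx v) act L x i\<bar> \<le> Kn"
    by (rule net_bnd2[OF M, where k=L]) blast
  let ?th = "coords idx \<theta>"
  define F0 where "F0 x = (\<Sum>u = 1..l L. (net l ?th actInf L x u - f x u)\<^sup>2)" for x
  define s where "s t x = (\<Sum>u = 1..l L. (net l ?th (actR R (max t 1)) L x u - f x u)\<^sup>2)" for t x
  define w where "w x = real (l L) * (8 * Kn\<^sup>2) + 2 * F0 x" for x
  have F0i: "integrable \<mu> F0" unfolding F0_def using int_inf by blast
  have nv: "norm \<theta> \<le> M" unfolding M_def by simp
  have "((\<lambda>t. integral\<^sup>L \<mu> (s t)) \<longlongrightarrow> integral\<^sup>L \<mu> F0) at_top"
  proof (rule integral_dominated_convergence_at_top[where w=w])
    show "F0 \<in> borel_measurable \<mu>" using F0i by auto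
    show "s t \<in> borel_measurable \<mu>" for t
      unfolding s_def using int_r[rule_format, of "max t 1" \<theta>] by auto
    show "integrable \<mu> w" unfolding w_def
      by (intro Bochner_Integration.integrable_add finite_measure.integrable_const[OF fin]
          Bochner_Integration.integrable_mult_right F0i)
    show "AE x in \<mu>. ((\<lambda>i. s i x) \<longlongrightarrow> F0 x) at_top"
    proof (rule AE_I2)
      fix x
      have "\<forall>\<^sub>F t in at_top. s t x = F0 x"
        using ev_ge1 ev_sq[of ?th x]
      proof eventually_elim
        case (elim t) then show ?case unfolding s_def F0_def by simp
      qed
      then show "((\<lambda>i. s i x) \<longlongrightarrow> F0 x) at_top" by (rule tendsto_eventually)
    qed
    have bnd: "norm (s t x) \<le> w x" if x: "x \<in> space \<mu>" for t :: real and x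
    proof -
      have t: "1 \<le> max t 1" by simp
      have each: "(net l ?th (actR R (max t 1)) L x u - f x u)\<^sup>2 \<le> 8 * Kn\<^sup>2 + 2 * (net l ?th actInf L x u - f x u)\<^sup>2" for u
      proof -
        have a: "\<bar>net l ?th (actR R (max t 1)) L x u\<bar> \<le> Kn" using Kn(2)[OF actR_facts(4)[OF t] nv x] .
        have b: "\<bar>net l ?th actInf L x u\<bar> \<le> Kn" using Kn(2)[OF actInf_facts(2) nv x] .
        have c: "(net l ?th (actR R (max t 1)) L x u - net l ?th actInf L x u)\<^sup>2 \<le> (2 * Kn)\<^sup>2"
        proof -
          have "\<bar>net l ?th (actR R (max t 1)) L x u - net l ?th actInf L x u\<bar> \<le> 2 * Kn" using a b by linarith
          then have "\<bar>net l ?th (actR R (max t 1)) L x u - net l ?th actInf L x u\<bar>\<^sup>2 \<le> (2 * Kn)\<^sup>2"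
            by (rule power_mono) simp
          then show ?thesis by simp
        qed
        have "(net l ?th (actR R (max t 1)) L x u - f x u)\<^sup>2
           = ((net l ?th (actR R (max t 1)) L x u - net l ?th actInf L x u) + (net l ?th actInf L x u - f x u))\<^sup>2"
          by simp
        also have "\<dots> \<le> 2 * (net l ?th (actR R (max t 1)) L x u - net l ?th actInf L x u)\<^sup>2 + 2 * (net l ?th actInf L x u - f x u)\<^sup>2"
          by (rule sq2)
        also have "\<dots> \<le> 8 * Kn\<^sup>2 + 2 * (net l ?th actInf L x u - f x u)\<^sup>2"
          using c by (simp add: power_mult_distrib)
        finally show ?thesis .
      qed
      have "s t x \<le> (\<Sum>u = 1..l L. 8 * Kn\<^sup>2 + 2 * (net l ?th actInf L x u - f x u)\<^sup>2)"
        unfolding s_def by (rule sum_mono) (rule each)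
      also have "\<dots> = w x" unfolding w_def F0_def by (simp add: sum.distrib sum_distrib_left)
      finally have "s t x \<le> w x" .
      moreover have "0 \<le> s t x" unfolding s_def by (intro sum_nonneg) simp
      ultimately show "norm (s t x) \<le> w x" by simp
    qed
    show "\<forall>\<^sub>F t in at_top. AE x in \<mu>. norm (s t x) \<le> w x"
      using bnd by (intro always_eventually allI AE_I2) blast
  qed
  moreover have "\<forall>\<^sub>F t in at_top. integral\<^sup>L \<mu> (s t) = loss l L \<mu> f (actR R t) ?th"
    using ev_ge1 unfolding loss_def by eventually_elim (rule Bochner_Integration.integral_cong, simp_all add: s_def max_absorb1)
  ultimately have "((\<lambda>t. loss l L \<mu> f (actR R t) ?th) \<longlongrightarrow> integral\<^sup>L \<mu> F0) at_top"
    by (rule Lim_transform_eventually)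
  then show ?thesis unfolding loss_def F0_def .
qed

definition ginf :: "real^'d \<Rightarrow> real^'d" where
  "ginf \<theta> = (\<chi> q. \<integral>x. Fg actInf actIndic (coords idx \<theta>) x (coords idx (axis q 1)) \<partial>\<mu>)"

lemma grad_r:
  assumes r: "1 \<le> r"
  shows "grad (\<lambda>v. loss l L \<mu> f (actR R r) (coords idx v)) \<theta>
     = (\<chi> q. \<integral>x. Fg (actR R r) (actD r) (coords idx \<theta>) x (coords idx (axis q 1)) \<partial>\<mu>)"
proof -
  obtain D where D: "\<And>v. ((\<lambda>u. loss l L \<mu> f (actR R r) (coords idx u)) has_derivative blinfun_apply (D v)) (at v)"
    "\<And>v h. D v h = (\<integral>x. Fg (actR R r) (actD r) (coords idx v) x (coords idx h) \<partial>\<mu>)"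
    by (rule DFr[OF r]) blast
  show ?thesis unfolding grad_eq[OF D(1)] D(2) ..
qed

lemma lim_grad:
  "((\<lambda>r. grad (\<lambda>v. loss l L \<mu> f (actR R r) (coords idx v)) \<theta>) \<longlongrightarrow> ginf \<theta>) at_top"
proof (rule vec_tendstoI)
  fix q
  have "\<forall>\<^sub>F r in at_top. (\<integral>x. Fg (actR R r) (actD r) (coords idx \<theta>) x (coords idx (axis q 1)) \<partial>\<mu>)
      = grad (\<lambda>v. loss l L \<mu> f (actR R r) (coords idx v)) \<theta> $ q"
    using ev_ge1 by eventually_elim (simp add: grad_r)
  then show "((\<lambda>r. grad (\<lambda>v. loss l L \<mu> f (actR R r) (coords idx v)) \<theta> $ q) \<longlongrightarrow> ginf \<theta> $ q) at_top"
    unfolding ginf_def vec_lambda_beta using lim_Fg by (rule Lim_transform_eventually[rotated])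
qed

end

context NN
begin

lemma actInf_app: "actInf m y = relu y" unfolding actInf_def ..

lemma inf_props:
  shows "\<And>k. actInf k \<in> borel_measurable borel" "\<And>k. actIndic k \<in> borel_measurable borel"
    "\<And>k y. \<bar>actInf k y\<bar> \<le> \<bar>y\<bar>" "\<And>k y. \<bar>actIndic k y\<bar> \<le> Cb"
  using actInf_meas actIndic_meas actInf_facts(2) actIndic_bound by blast+

lemma ginf_weight:
  assumes kL: "k \<in> {1..L}" and i: "i \<in> {1..l k}" and j: "j \<in> {1..l (k - 1)}"
  shows "ginf \<theta> $ idx ((i - 1) * l (k - 1) + j + dsum l (k - 1)) =
          (\<Sum>v\<in>PiE {k..L} (\<lambda>w. {1..l w}).
             \<integral>x. 2 * (relu (net l (coords idx \<theta>) actInf (max (k - 1) 1) x j)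
                       * (indicator {1<..L} k :: real)
                       + x j * (indicator {1} k :: real))
                  * (indicator {i} (v k) :: real)
                  * (net l (coords idx \<theta>) actInf L x (v L) - f x (v L))
                  * (\<Prod>n\<in>{k+1..L}. wgt l (coords idx \<theta>) n (v n) (v (n - 1))
                       * (indicator {y \<in> PiE {1..l 0} (\<lambda>_. {a..b}).
                                        0 < net l (coords idx \<theta>) actInf (n - 1) y (v (n - 1))} x :: real)) \<partial>\<mu>)"
proof -
  let ?p = "(i - 1) * l (k - 1) + j + dsum l (k - 1)"
  let ?e = "axis (idx ?p) 1 :: real^'d"
  have H: "\<forall>q\<in>{1..dsum l L}. coords idx ?e q = (if q = ?p then 1 else 0)"
    by (rule unit_coords[OF windex_in[OF kL i j]])
  have "ginf \<theta> $ idx ?p = (\<integral>x. (\<Sum>v\<in>PiE {k..L} (\<lambda>w. {1..l w}). pathW actInf actIndic (coords idx \<theta>) k i j x v) \<partial>\<mu>)"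
    unfolding ginf_def vec_lambda_beta Fg_weight[OF H kL i j refl] ..
  also have "\<dots> = (\<Sum>v\<in>PiE {k..L} (\<lambda>w. {1..l w}). \<integral>x. pathW actInf actIndic (coords idx \<theta>) k i j x v \<partial>\<mu>)"
    by (rule Bochner_Integration.integral_sum)
       (rule int_path(1)[OF inf_props int_inf[rule_format] kL j], assumption)
  finally show ?thesis
  proof (rule trans, intro sum.cong refl Bochner_Integration.integral_cong)
    fix v x assume x: "x \<in> space \<mu>"
    have ind: "actIndic (n - 1) (net l (coords idx \<theta>) actInf (n - 1) x (v (n - 1)))
       = (indicator {y \<in> PiE {1..l 0} (\<lambda>_. {a..b}). 0 < net l (coords idx \<theta>) actInf (n - 1) y (v (n - 1))} x :: real)" for n
      using x unfolding space_mu actIndic_def indicator_def by simp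
    show "pathW actInf actIndic (coords idx \<theta>) k i j x v =
      2 * (relu (net l (coords idx \<theta>) actInf (max (k - 1) 1) x j)
                       * (indicator {1<..L} k :: real)
                       + x j * (indicator {1} k :: real))
                  * (indicator {i} (v k) :: real)
                  * (net l (coords idx \<theta>) actInf L x (v L) - f x (v L))
                  * (\<Prod>n\<in>{k+1..L}. wgt l (coords idx \<theta>) n (v n) (v (n - 1))
                       * (indicator {y \<in> PiE {1..l 0} (\<lambda>_. {a..b}).
                                        0 < net l (coords idx \<theta>) actInf (n - 1) y (v (n - 1))} x :: real))"
      unfolding pathW_def cW_def PP_def actInf_app ind ..
  qed
qed

lemma ginf_bias:
  assumes kL: "k \<in> {1..L}" and i: "i \<in> {1..l k}"
  shows "ginf \<theta> $ idx (l k * l (k - 1) + i + dsum l (k - 1)) =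
          (\<Sum>v\<in>PiE {k..L} (\<lambda>w. {1..l w}).
             \<integral>x. 2 * (indicator {i} (v k) :: real)
                  * (net l (coords idx \<theta>) actInf L x (v L) - f x (v L))
                  * (\<Prod>n\<in>{k+1..L}. wgt l (coords idx \<theta>) n (v n) (v (n - 1))
                       * (indicator {y \<in> PiE {1..l 0} (\<lambda>_. {a..b}).
                                        0 < net l (coords idx \<theta>) actInf (n - 1) y (v (n - 1))} x :: real)) \<partial>\<mu>)"
proof -
  let ?p = "l k * l (k - 1) + i + dsum l (k - 1)"
  let ?e = "axis (idx ?p) 1 :: real^'d"
  have H: "\<forall>q\<in>{1..dsum l L}. coords idx ?e q = (if q = ?p then 1 else 0)"
    by (rule unit_coords[OF bindex_in[OF kL i]])
  have j1: "1 \<in> {1..l (k - 1)}" using l_pos by auto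
  have "ginf \<theta> $ idx ?p = (\<integral>x. (\<Sum>v\<in>PiE {k..L} (\<lambda>w. {1..l w}). pathB actInf actIndic (coords idx \<theta>) k i x v) \<partial>\<mu>)"
    unfolding ginf_def vec_lambda_beta Fg_bias[OF H kL i refl] ..
  also have "\<dots> = (\<Sum>v\<in>PiE {k..L} (\<lambda>w. {1..l w}). \<integral>x. pathB actInf actIndic (coords idx \<theta>) k i x v \<partial>\<mu>)"
    by (rule Bochner_Integration.integral_sum)
       (rule int_path(2)[OF inf_props int_inf[rule_format] kL j1], assumption)
  finally show ?thesis
  proof (rule trans, intro sum.cong refl Bochner_Integration.integral_cong)
    fix v x assume x: "x \<in> space \<mu>"
    have ind: "actIndic (n - 1) (net l (coords idx \<theta>) actInf (n - 1) x (v (n - 1)))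
       = (indicator {y \<in> PiE {1..l 0} (\<lambda>_. {a..b}). 0 < net l (coords idx \<theta>) actInf (n - 1) y (v (n - 1))} x :: real)" for n
      using x unfolding space_mu actIndic_def indicator_def by simp
    show "pathB actInf actIndic (coords idx \<theta>) k i x v =
      2 * (indicator {i} (v k) :: real)
                  * (net l (coords idx \<theta>) actInf L x (v L) - f x (v L))
                  * (\<Prod>n\<in>{k+1..L}. wgt l (coords idx \<theta>) n (v n) (v (n - 1))
                       * (indicator {y \<in> PiE {1..l 0} (\<lambda>_. {a..b}).
                                        0 < net l (coords idx \<theta>) actInf (n - 1) y (v (n - 1))} x :: real))"
      unfolding pathB_def PP_def ind ..
  qed
qed

end

theorem theorem2p9:
  fixes L :: nat and l :: "nat \<Rightarrow> nat" and a b A B :: real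
    and idx :: "nat \<Rightarrow> 'd::finite"
    and R :: "real \<Rightarrow> real \<Rightarrow> real"
    and \<mu> :: "(nat \<Rightarrow> real) measure"
    and f :: "(nat \<Rightarrow> real) \<Rightarrow> nat \<Rightarrow> real"
    and G :: "real^'d \<Rightarrow> real^'d"
    and \<theta> :: "real^'d"
  assumes L_pos: "1 \<le> L"
    and l_pos: "\<forall>k. 1 \<le> l k"
    and ab: "a < b"
    and AB: "0 < A" "A < B"
    and idx_bij: "bij_betw idx {1..dsum l L} UNIV"
    and R_C1: "\<forall>r\<ge>1. R r C1_differentiable_on UNIV"
    and R_zero: "\<forall>r\<ge>1. \<forall>x. x \<le> A / r \<longrightarrow> R r x = 0"
    and R_bounds: "\<forall>r\<ge>1. \<forall>y. 0 \<le> R r y \<and> R r y \<le> max y 0"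
    and R_id: "\<forall>r\<ge>1. \<forall>z. B / r \<le> z \<longrightarrow> R r z = z"
    and R_deriv_bdd: "\<exists>C. \<forall>r\<ge>1. \<forall>x. \<bar>deriv (R r) x\<bar> \<le> C"
    and mu_sets: "sets \<mu> = sets (restrict_space borel (PiE {1..l 0} (\<lambda>_. {a..b})))"
    and mu_finite: "emeasure \<mu> (space \<mu>) < \<infinity>"
    and f_meas: "\<forall>i\<in>{1..l L}. (\<lambda>x. f x i) \<in> borel_measurable \<mu>"
    and int_r: "\<forall>r\<ge>1. \<forall>\<phi>. integrable \<mu>
                  (\<lambda>x. \<Sum>i = 1..l L. (net l (coords idx \<phi>) (actR R r) L x i - f x i)\<^sup>2)"
    and int_inf: "\<forall>\<phi>. integrable \<mu>
                  (\<lambda>x. \<Sum>i = 1..l L. (net l (coords idx \<phi>) actInf L x i - f x i)\<^sup>2)"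
    and G_def: "\<forall>\<phi>. (\<exists>g. ((\<lambda>r. grad (\<lambda>v. loss l L \<mu> f (actR R r) (coords idx v)) \<phi>) \<longlongrightarrow> g) at_top)
                  \<longrightarrow> ((\<lambda>r. grad (\<lambda>v. loss l L \<mu> f (actR R r) (coords idx v)) \<phi>) \<longlongrightarrow> G \<phi>) at_top"
  shows
    \<comment> \<open>(i)\<close>
    "(\<forall>r\<ge>1. \<exists>D :: (real^'d) \<Rightarrow> ((real^'d) \<Rightarrow>\<^sub>L real).
        (\<forall>v. ((\<lambda>u. loss l L \<mu> f (actR R r) (coords idx u)) has_derivative blinfun_apply (D v)) (at v))
        \<and> continuous_on UNIV D)
    \<comment> \<open>(ii)\<close>
   \<and> (\<forall>r\<ge>1. \<forall>k\<in>{1..L}. \<forall>i\<in>{1..l k}. \<forall>j\<in>{1..l (k - 1)}.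
        ((\<lambda>t. loss l L \<mu> f (actR R r)
                 (coords idx (\<theta> + t *\<^sub>R axis (idx ((i - 1) * l (k - 1) + j + dsum l (k - 1))) 1)))
          has_real_derivative
          (\<Sum>v\<in>PiE {k..L} (\<lambda>w. {1..l w}).
             \<integral>x. 2 * (R (r powr (1 / real (max (k - 1) 1)))
                         (net l (coords idx \<theta>) (actR R r) (max (k - 1) 1) x j)
                       * (indicator {1<..L} k :: real)
                       + x j * (indicator {1} k :: real))
                  * (indicator {i} (v k) :: real)
                  * (net l (coords idx \<theta>) (actR R r) L x (v L) - f x (v L))
                  * (\<Prod>n\<in>{k+1..L}. wgt l (coords idx \<theta>) n (v n) (v (n - 1))
                       * deriv (R (r powr (1 / real (n - 1))))
                           (net l (coords idx \<theta>) (actR R r) (n - 1) x (v (n - 1)))) \<partial>\<mu>))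
          (at 0))
    \<comment> \<open>(iii)\<close>
   \<and> (\<forall>r\<ge>1. \<forall>k\<in>{1..L}. \<forall>i\<in>{1..l k}.
        ((\<lambda>t. loss l L \<mu> f (actR R r)
                 (coords idx (\<theta> + t *\<^sub>R axis (idx (l k * l (k - 1) + i + dsum l (k - 1))) 1)))
          has_real_derivative
          (\<Sum>v\<in>PiE {k..L} (\<lambda>w. {1..l w}).
             \<integral>x. 2 * (indicator {i} (v k) :: real)
                  * (net l (coords idx \<theta>) (actR R r) L x (v L) - f x (v L))
                  * (\<Prod>n\<in>{k+1..L}. wgt l (coords idx \<theta>) n (v n) (v (n - 1))
                       * deriv (R (r powr (1 / real (n - 1))))
                           (net l (coords idx \<theta>) (actR R r) (n - 1) x (v (n - 1)))) \<partial>\<mu>))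
          (at 0))
    \<comment> \<open>(iv)\<close>
   \<and> Limsup at_top (\<lambda>r. ereal (\<bar>loss l L \<mu> f (actR R r) (coords idx \<theta>)
                                  - loss l L \<mu> f actInf (coords idx \<theta>)\<bar>
                + norm (grad (\<lambda>v. loss l L \<mu> f (actR R r) (coords idx v)) \<theta> - G \<theta>))) = 0
    \<comment> \<open>(v)\<close>
   \<and> (\<forall>k\<in>{1..L}. \<forall>i\<in>{1..l k}. \<forall>j\<in>{1..l (k - 1)}.
        G \<theta> $ idx ((i - 1) * l (k - 1) + j + dsum l (k - 1)) =
          (\<Sum>v\<in>PiE {k..L} (\<lambda>w. {1..l w}).
             \<integral>x. 2 * (relu (net l (coords idx \<theta>) actInf (max (k - 1) 1) x j)
                       * (indicator {1<..L} k :: real)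
                       + x j * (indicator {1} k :: real))
                  * (indicator {i} (v k) :: real)
                  * (net l (coords idx \<theta>) actInf L x (v L) - f x (v L))
                  * (\<Prod>n\<in>{k+1..L}. wgt l (coords idx \<theta>) n (v n) (v (n - 1))
                       * (indicator {y \<in> PiE {1..l 0} (\<lambda>_. {a..b}).
                                        0 < net l (coords idx \<theta>) actInf (n - 1) y (v (n - 1))} x :: real)) \<partial>\<mu>))
    \<comment> \<open>(vi)\<close>
   \<and> (\<forall>k\<in>{1..L}. \<forall>i\<in>{1..l k}.
        G \<theta> $ idx (l k * l (k - 1) + i + dsum l (k - 1)) =
          (\<Sum>v\<in>PiE {k..L} (\<lambda>w. {1..l w}).
             \<integral>x. 2 * (indicator {i} (v k) :: real)
                  * (net l (coords idx \<theta>) actInf L x (v L) - f x (v L))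
                  * (\<Prod>n\<in>{k+1..L}. wgt l (coords idx \<theta>) n (v n) (v (n - 1))
                       * (indicator {y \<in> PiE {1..l 0} (\<lambda>_. {a..b}).
                                        0 < net l (coords idx \<theta>) actInf (n - 1) y (v (n - 1))} x :: real)) \<partial>\<mu>))"
proof -
  interpret N: NN L l a b A B idx R \<mu> f
    by (rule NN.intro[OF L_pos l_pos ab AB(1) AB(2) idx_bij R_C1 R_zero R_bounds R_id R_deriv_bdd
          mu_sets mu_finite f_meas int_r int_inf])
  have P1: "\<forall>r\<ge>1. \<exists>D :: (real^'d) \<Rightarrow> ((real^'d) \<Rightarrow>\<^sub>L real).
        (\<forall>v. ((\<lambda>u. loss l L \<mu> f (actR R r) (coords idx u)) has_derivative blinfun_apply (D v)) (at v))
        \<and> continuous_on UNIV D"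
  proof (intro allI impI)
    fix r :: real assume r: "1 \<le> r"
    obtain D :: "(real^'d) \<Rightarrow> ((real^'d) \<Rightarrow>\<^sub>L real)" where
      "\<And>v. ((\<lambda>u. loss l L \<mu> f (actR R r) (coords idx u)) has_derivative blinfun_apply (D v)) (at v)"
      "continuous_on UNIV D"
      by (rule N.DFr[OF r]) blast
    then show "\<exists>D :: (real^'d) \<Rightarrow> ((real^'d) \<Rightarrow>\<^sub>L real).
        (\<forall>v. ((\<lambda>u. loss l L \<mu> f (actR R r) (coords idx u)) has_derivative blinfun_apply (D v)) (at v))
        \<and> continuous_on UNIV D" by blast
  qed
  have Gt: "G \<theta> = N.ginf \<theta>"
  proof -
    have lg: "((\<lambda>r. grad (\<lambda>v. loss l L \<mu> f (actR R r) (coords idx v)) \<theta>) \<longlongrightarrow> N.ginf \<theta>) at_top"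
      by (rule N.lim_grad)
    then have "((\<lambda>r. grad (\<lambda>v. loss l L \<mu> f (actR R r) (coords idx v)) \<theta>) \<longlongrightarrow> G \<theta>) at_top"
      using G_def by blast
    then show ?thesis by (rule tendsto_unique[OF trivial_limit_at_top_linorder _ lg])
  qed
  have P4: "Limsup at_top (\<lambda>r. ereal (\<bar>loss l L \<mu> f (actR R r) (coords idx \<theta>)
                                  - loss l L \<mu> f actInf (coords idx \<theta>)\<bar>
                + norm (grad (\<lambda>v. loss l L \<mu> f (actR R r) (coords idx v)) \<theta> - G \<theta>))) = 0"
  proof -
    have a: "((\<lambda>r. loss l L \<mu> f (actR R r) (coords idx \<theta>) - loss l L \<mu> f actInf (coords idx \<theta>)) \<longlongrightarrow> 0) at_top"
      using tendsto_diff[OF N.lim_loss[of \<theta>] tendsto_const[of "loss l L \<mu> f actInf (coords idx \<theta>)"]] by simp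
    have b: "((\<lambda>r. grad (\<lambda>v. loss l L \<mu> f (actR R r) (coords idx v)) \<theta> - G \<theta>) \<longlongrightarrow> 0) at_top"
      using tendsto_diff[OF N.lim_grad[of \<theta>] tendsto_const[of "G \<theta>"]] Gt by simp
    have "((\<lambda>r. \<bar>loss l L \<mu> f (actR R r) (coords idx \<theta>) - loss l L \<mu> f actInf (coords idx \<theta>)\<bar>
                + norm (grad (\<lambda>v. loss l L \<mu> f (actR R r) (coords idx v)) \<theta> - G \<theta>)) \<longlongrightarrow> 0) at_top"
      using tendsto_add_zero[OF tendsto_rabs_zero[OF a] tendsto_norm_zero[OF b]] .
    then have "((\<lambda>r. ereal (\<bar>loss l L \<mu> f (actR R r) (coords idx \<theta>) - loss l L \<mu> f actInf (coords idx \<theta>)\<bar>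
                + norm (grad (\<lambda>v. loss l L \<mu> f (actR R r) (coords idx v)) \<theta> - G \<theta>))) \<longlongrightarrow> ereal 0) at_top"
      by (rule tendsto_ereal)
    then have "Limsup at_top (\<lambda>r. ereal (\<bar>loss l L \<mu> f (actR R r) (coords idx \<theta>)
                                  - loss l L \<mu> f actInf (coords idx \<theta>)\<bar>
                + norm (grad (\<lambda>v. loss l L \<mu> f (actR R r) (coords idx v)) \<theta> - G \<theta>))) = ereal 0"
      by (intro lim_imp_Limsup) simp_all
    then show ?thesis by (simp add: zero_ereal_def)
  qed
  show ?thesis
    using P1 P4 N.deriv_weight N.deriv_bias N.ginf_weight N.ginf_bias unfolding Gt
    by (intro conjI ballI allI impI) blast+
qed

end
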